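(* Let $T=0$, let $\epsilon>0$ be admissible, and let $\mathbf X^{(\epsilon)}(t)=(X_0(t),\dots,X_{n_\epsilon-1}(t))$ be the continuous-time Markov chain on $\mathbb N^{n_\epsilon}$ defined in the context. If $$\lambda<\frac{C}{L\ln(2)\int_{\mathbf S} l_\epsilon(x,0)\,dx}=\frac{C}{L\ln(2)\,\epsilon^2\sum_{k=0}^{n_\epsilon-1}l_\epsilon(a_k,0)},$$ then $\mathbf X^{(\epsilon)}(t)$ is ergodic (positive recurrent).
   Context: Setting ($T=0$). $\mathbf S=[-Q,Q]^2$ with opposite edges identified (flat torus), torus distance $\|\cdot\|$. Path-loss $l:[0,\infty)\to[0,\infty)$ bounded, non-increasing, $l(0)=1$; noise $\mathcal N_0>0$; constants $C>0$, $L>0$, $\lambda>0$. Discretization: $\epsilon>0$ is admissible if $2Q/\epsilon$ is an integer; tessellate $\mathbf S$ into $n_\epsilon=(2Q/\epsilon)^2$ squares $A_0,\dots,A_{n_\epsilon-1}$ of side $\epsilon$ with centers $a_i$ and $a_0=0$. Define $l_\epsilon(a_i,a_j)=\sup\{l(\|b-b'\|): b\in\overline{A_i},\,b'\in\overline{A_j}\}$ and, for $x\in A_i$, $y\in A_j$, $l_\epsilon(x,y)=l_\epsilon(a_i,a_j)$. The chain $\mathbf X^{(\epsilon)}$ on $\mathbb N^{n_\epsilon}$ (the cell-count process of the discretized birth–death dynamics) has transitions: for each $i$, $X_i\to X_i+1$ at rate $\lambda\epsilon^2$, and $X_i\to X_i-1$ at rate $\frac{C}{L}X_i\log_2\!\Big(1+\frac{1}{\mathcal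 N_0+\sum_{j=0}^{n_\epsilon-1}(X_j-\mathbf 1\{j=i\})\,l_\epsilon(a_i,a_j)}\Big)$. *)

theory Defs
  imports "HOL-Analysis.Analysis"
begin

text \<open>A chain is given by its off-diagonal rates q x y (x \<noteq> y) on a state set S.\<close>

definition out_rate :: "('s \<Rightarrow> 's \<Rightarrow> real) \<Rightarrow> 's set \<Rightarrow> 's \<Rightarrow> ennreal" where
  "out_rate q S x = (\<integral>\<^sup>+ y. ennreal (q x y) \<partial>count_space (S - {x}))"

definition jump_prob :: "('s \<Rightarrow> 's \<Rightarrow> real) \<Rightarrow> 's set \<Rightarrow> 's \<Rightarrow> 's \<Rightarrow> ennreal" where
  "jump_prob q S x y =
     (if x \<in> S \<and> y \<in> S \<and> y \<noteq> x then ennreal (q x y) / out_rate q S x else 0)"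

definition path_prob :: "('s \<Rightarrow> 's \<Rightarrow> real) \<Rightarrow> 's set \<Rightarrow> 's list \<Rightarrow> ennreal" where
  "path_prob q S xs = (\<Prod>i<length xs - 1. jump_prob q S (xs ! i) (xs ! Suc i))"

definition excursions :: "'s set \<Rightarrow> 's \<Rightarrow> 's list set" where
  "excursions S x = {ys. set ys \<subseteq> S - {x}}"

text \<open>Probability, started in x, that the chain ever returns to x after its first jump.\<close>
definition return_prob :: "('s \<Rightarrow> 's \<Rightarrow> real) \<Rightarrow> 's set \<Rightarrow> 's \<Rightarrow> ennreal" where
  "return_prob q S x =
     (\<integral>\<^sup>+ ys. path_prob q S (x # ys @ [x]) \<partial>count_space (excursions S x))"

text \<open>Expected return time E_x[T_x; T_x < \<infinity>]: along a returning jump path x, y1, ..., yk, x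
  the holding times are independent exponentials with means 1/q(x), 1/q(y1), ..., 1/q(yk).\<close>
definition mean_return_time :: "('s \<Rightarrow> 's \<Rightarrow> real) \<Rightarrow> 's set \<Rightarrow> 's \<Rightarrow> ennreal" where
  "mean_return_time q S x =
     (\<integral>\<^sup>+ ys. path_prob q S (x # ys @ [x]) * (\<Sum>z\<leftarrow>x # ys. 1 / out_rate q S z)
        \<partial>count_space (excursions S x))"

text \<open>Positive recurrence (Norris): q_x = 0, or E_x[T_x] < \<infinity> (where T_x = \<infinity> on non-return).\<close>
definition ctmc_positive_recurrent :: "('s \<Rightarrow> 's \<Rightarrow> real) \<Rightarrow> 's set \<Rightarrow> 's \<Rightarrow> bool" where
  "ctmc_positive_recurrent q S x \<longleftrightarrow>
     out_rate q S x = 0 \<or> (return_prob q S x = 1 \<and> mean_return_time q S x < \<infinity>)"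

definition ctmc_irreducible :: "('s \<Rightarrow> 's \<Rightarrow> real) \<Rightarrow> 's set \<Rightarrow> bool" where
  "ctmc_irreducible q S \<longleftrightarrow>
     (\<forall>x\<in>S. \<forall>y\<in>S. (x, y) \<in> {(a, b). a \<in> S \<and> b \<in> S \<and> a \<noteq> b \<and> q a b > 0}\<^sup>*)"

definition ctmc_ergodic :: "('s \<Rightarrow> 's \<Rightarrow> real) \<Rightarrow> 's set \<Rightarrow> bool" where
  "ctmc_ergodic q S \<longleftrightarrow> ctmc_irreducible q S \<and> (\<forall>x\<in>S. ctmc_positive_recurrent q S x)"

definition tdist1 :: "real \<Rightarrow> real \<Rightarrow> real" where
  "tdist1 Q u = Inf (range (\<lambda>k::int. \<bar>u - 2 * Q * of_int k\<bar>))"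

definition torus_dist :: "real \<Rightarrow> real \<times> real \<Rightarrow> real \<times> real \<Rightarrow> real" where
  "torus_dist Q b b' = sqrt ((tdist1 Q (fst b - fst b'))\<^sup>2 + (tdist1 Q (snd b - snd b'))\<^sup>2)"

text \<open>Center a_i of cell i (i < m^2, m = 2Q/eps); a_0 = 0. Points of the torus are represented
  by points of R^2 modulo 2Q in each coordinate.\<close>
definition cell_center :: "real \<Rightarrow> nat \<Rightarrow> nat \<Rightarrow> real \<times> real" where
  "cell_center eps m i = (eps * real (i mod m), eps * real (i div m))"

definition cell_closure :: "real \<Rightarrow> real \<times> real \<Rightarrow> (real \<times> real) set" where
  "cell_closure eps a = {b. \<bar>fst b - fst a\<bar> \<le> eps / 2 \<and> \<bar>snd b - snd a\<bar> \<le> eps / 2}"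

definition l_eps :: "(real \<Rightarrow> real) \<Rightarrow> real \<Rightarrow> real \<Rightarrow> real \<times> real \<Rightarrow> real \<times> real \<Rightarrow> real" where
  "l_eps l Q eps a a' =
     Sup {l (torus_dist Q b b') | b b'. b \<in> cell_closure eps a \<and> b' \<in> cell_closure eps a'}"

definition death_rate ::
  "(real \<Rightarrow> real) \<Rightarrow> real \<Rightarrow> real \<Rightarrow> nat \<Rightarrow> real \<Rightarrow> real \<Rightarrow> real \<Rightarrow> nat list \<Rightarrow> nat \<Rightarrow> real" where
  "death_rate l Q eps m C L N0 x i =
     C / L * real (x ! i) *
     log 2 (1 + 1 / (N0 + (\<Sum>j<m\<^sup>2. (real (x ! j) - (if j = i then 1 else 0)) *
                         l_eps l Q eps (cell_center eps m i) (cell_center eps m j))))"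

definition disc_rate ::
  "(real \<Rightarrow> real) \<Rightarrow> real \<Rightarrow> real \<Rightarrow> nat \<Rightarrow> real \<Rightarrow> real \<Rightarrow> real \<Rightarrow> real \<Rightarrow> nat list \<Rightarrow> nat list \<Rightarrow> real" where
  "disc_rate l Q eps m lam C L N0 x y =
     (\<Sum>i<m\<^sup>2. (if y = x[i := x ! i + 1] then lam * eps\<^sup>2 else 0)) +
     (\<Sum>i<m\<^sup>2. (if 0 < x ! i \<and> y = x[i := x ! i - 1] then death_rate l Q eps m C L N0 x i else 0))"

definition disc_states :: "nat \<Rightarrow> nat list set" where
  "disc_states m = {x. length x = m\<^sup>2}"

end

theory Submission
  imports Defs
begin

definition Kop :: "('s \<Rightarrow> 's \<Rightarrow> ennreal) \<Rightarrow> 's set \<Rightarrow> ('s \<Rightarrow> ennreal) \<Rightarrow> 's \<Rightarrow> ennreal" where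
  "Kop p A g z = (\<integral>\<^sup>+ y. p z y * g y \<partial>count_space A)"

lemma Kop_mono_on:
  assumes "\<And>y. y \<in> A \<Longrightarrow> f y \<le> g y"
  shows "Kop p A f z \<le> Kop p A g z"
  unfolding Kop_def by (rule nn_integral_mono) (auto intro: mult_left_mono assms)

lemma Kop_add: "Kop p A (\<lambda>y. f y + g y) z = Kop p A f z + Kop p A g z"
  unfolding Kop_def by (simp add: distrib_left nn_integral_add)

lemma Kop_cmult: "Kop p A (\<lambda>y. c * f y) z = c * Kop p A f z"
  unfolding Kop_def
  by (simp add: nn_integral_cmult[symmetric] mult.left_commute)

lemma Kop_sum: "Kop p A (\<lambda>y. \<Sum>i\<in>I. f i y) z = (\<Sum>i\<in>I. Kop p A (f i) z)"
  unfolding Kop_def by (simp add: sum_distrib_left nn_integral_sum)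

lemma Kop_subset: "A \<subseteq> B \<Longrightarrow> Kop p A f z \<le> Kop p B f z"
  unfolding Kop_def
  apply (subst (1 2) nn_integral_count_space_indicator)
  by (auto intro!: nn_integral_mono simp: indicator_def)

lemma Kpow_mono_on:
  assumes "\<And>y. y \<in> S \<Longrightarrow> f y \<le> g y" "A \<subseteq> S" "z \<in> S"
  shows "(Kop p A ^^ n) f z \<le> (Kop p A ^^ n) g z"
  using assms(3)
proof (induction n arbitrary: z)
  case 0 then show ?case using assms(1) by simp
next
  case (Suc n) then show ?case using assms(2) by (auto intro!: Kop_mono_on)
qed

lemma Kpow_add: "(Kop p A ^^ n) (\<lambda>y. f y + g y) z = (Kop p A ^^ n) f z + (Kop p A ^^ n) g z"
proof (induction n arbitrary: z)
  case (Suc n)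
  have "(Kop p A ^^ n) (\<lambda>y. f y + g y) = (\<lambda>y. (Kop p A ^^ n) f y + (Kop p A ^^ n) g y)"
    using Suc by auto
  then show ?case by (simp add: Kop_add)
qed simp

lemma Kpow_cmult: "(Kop p A ^^ n) (\<lambda>y. c * f y) z = c * (Kop p A ^^ n) f z"
proof (induction n arbitrary: z)
  case (Suc n)
  have "(Kop p A ^^ n) (\<lambda>y. c * f y) = (\<lambda>y. c * (Kop p A ^^ n) f y)"
    using Suc by auto
  then show ?case by (simp add: Kop_cmult)
qed simp

lemma Kpow_sum: "(Kop p A ^^ n) (\<lambda>y. \<Sum>i\<in>I. f i y) z = (\<Sum>i\<in>I. (Kop p A ^^ n) (f i) z)"
proof (induction n arbitrary: z)
  case (Suc n)
  have "(Kop p A ^^ n) (\<lambda>y. \<Sum>i\<in>I. f i y) = (\<lambda>y. \<Sum>i\<in>I. (Kop p A ^^ n) (f i) y)"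
    using Suc by auto
  then show ?case by (simp add: Kop_sum)
qed simp

lemma Kpow_const:
  "(Kop p A ^^ n) (\<lambda>y. c) z = c * (Kop p A ^^ n) (\<lambda>_. 1) z"
  using Kpow_cmult[where c=c and f="\<lambda>_. 1"] by simp


lemma sum_lessThan_add_split: "(\<Sum>n<a + b. g n) = (\<Sum>n<a. g n) + (\<Sum>n<b. g (a + n))"
  for g :: "nat \<Rightarrow> 'a::comm_monoid_add"
  by (induction b) (simp_all add: add.assoc)

locale fchain =
  fixes p :: "'s \<Rightarrow> 's \<Rightarrow> ennreal" and S :: "'s set" and x :: 's
  assumes outside: "\<And>z y. z \<notin> S \<Longrightarrow> p z y = 0"
    and stoch: "\<And>z. z \<in> S \<Longrightarrow> Kop p S (\<lambda>_. 1) z = 1"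
    and xS: "x \<in> S"
begin

abbreviation "K \<equiv> Kop p (S - {x})"
abbreviation "P \<equiv> Kop p S"

definition "Tt N z = (\<Sum>n<N. (K ^^ n) (\<lambda>_. 1) z)"

lemma K_out: "z \<notin> S \<Longrightarrow> Kop p A g z = 0"
  unfolding Kop_def using outside by simp

lemma K1_le: "K (\<lambda>_. 1) z \<le> 1"
proof (cases "z \<in> S")
  case True
  have "K (\<lambda>_. 1) z \<le> P (\<lambda>_. 1) z" by (rule Kop_subset) auto
  then show ?thesis using stoch True by simp
qed (simp add: K_out)

lemma Kpow1_le: "(K ^^ n) (\<lambda>_. 1) z \<le> 1"
proof (induction n arbitrary: z)
  case (Suc n)
  have "(K ^^ Suc n) (\<lambda>_. 1) z \<le> K (\<lambda>_. 1) z"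
    using Suc by (auto intro!: Kop_mono_on)
  also have "\<dots> \<le> 1" by (rule K1_le)
  finally show ?case .
qed simp

lemma Kpow1_anti: "k \<le> m \<Longrightarrow> (K ^^ m) (\<lambda>_. 1) z \<le> (K ^^ k) (\<lambda>_. 1) z"
proof -
  assume "k \<le> m"
  then obtain j where m: "m = k + j" using le_Suc_ex by blast
  have "(K ^^ m) (\<lambda>_. 1) z = (K ^^ k) ((K ^^ j) (\<lambda>_. 1)) z"
    by (simp add: m funpow_add)
  also have "\<dots> \<le> (K ^^ k) (\<lambda>_. 1) z"
    by (rule Kpow_mono_on[where S=UNIV]) (auto intro: Kpow1_le)
  finally show ?thesis .
qed

lemma Tt_le: "Tt N z \<le> of_nat N"
proof -
  have "Tt N z \<le> (\<Sum>n<N. 1)" unfolding Tt_def by (rule sum_mono) (rule Kpow1_le)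
  then show ?thesis by simp
qed

lemma Tt_split: "Tt (a + b) z = Tt a z + (K ^^ a) (Tt b) z"
proof -
  have "(K ^^ a) (Tt b) z = (\<Sum>n<b. (K ^^ a) ((K ^^ n) (\<lambda>_. 1)) z)"
    unfolding Tt_def by (rule Kpow_sum)
  also have "\<dots> = (\<Sum>n<b. (K ^^ (a + n)) (\<lambda>_. 1) z)"
    by (simp add: funpow_add)
  finally show ?thesis unfolding Tt_def by (simp add: sum_lessThan_add_split)
qed

lemma uniform_reach:
  assumes "finite F"
    and reach: "\<And>z. z \<in> S \<Longrightarrow> \<exists>k\<ge>1. \<exists>q>0. (K ^^ k) (\<lambda>_. 1) z + ennreal q \<le> 1"
  shows "\<exists>m\<ge>1. \<exists>q>0. \<forall>f\<in>F \<inter> S. (K ^^ m) (\<lambda>_. 1) f + ennreal q \<le> 1"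
  using assms(1)
proof (induction F rule: finite_induct)
  case empty
  then show ?case by (intro exI[of _ 1]) (auto intro: exI[of _ "1::real"])
next
  case (insert f F)
  then obtain m1 q1 where m1: "m1 \<ge> 1" "q1 > 0" "\<forall>g\<in>F \<inter> S. (K ^^ m1) (\<lambda>_. 1) g + ennreal q1 \<le> 1"
    by blast
  show ?case
  proof (cases "f \<in> S")
    case False
    then show ?thesis using m1 by auto
  next
    case True
    then obtain k q2 where k: "k \<ge> 1" "q2 > 0" "(K ^^ k) (\<lambda>_. 1) f + ennreal q2 \<le> 1"
      using reach by blast
    define m where "m = max m1 k"
    define q where "q = min q1 q2"
    have "\<forall>g\<in>insert f F \<inter> S. (K ^^ m) (\<lambda>_. 1) g + ennreal q \<le> 1"
    proof
      fix g assume g: "g \<in> insert f F \<inter> S"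
      show "(K ^^ m) (\<lambda>_. 1) g + ennreal q \<le> 1"
      proof (cases "g = f")
        case True
        have "(K ^^ m) (\<lambda>_. 1) f + ennreal q \<le> (K ^^ k) (\<lambda>_. 1) f + ennreal q2"
          by (intro add_mono Kpow1_anti ennreal_leI) (auto simp: m_def q_def)
        then show ?thesis using k True by simp
      next
        case False
        then have "g \<in> F \<inter> S" using g by auto
        have "(K ^^ m) (\<lambda>_. 1) g + ennreal q \<le> (K ^^ m1) (\<lambda>_. 1) g + ennreal q1"
          by (intro add_mono Kpow1_anti ennreal_leI) (auto simp: m_def q_def)
        then show ?thesis using m1 \<open>g \<in> F \<inter> S\<close> by (meson order_trans)
      qed
    qed
    moreover have "m \<ge> 1" "q > 0" using m1 k by (auto simp: m_def q_def)
    ultimately show ?thesis by blast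
  qed
qed

lemma Ppow_bound:
  assumes bnd: "\<And>z. z \<in> S \<Longrightarrow> P V z \<le> V z + ennreal D" and "D \<ge> 0"
  shows "z \<in> S \<Longrightarrow> (P ^^ j) V z \<le> V z + of_nat j * ennreal D"
proof (induction j arbitrary: z)
  case (Suc j)
  have "(P ^^ Suc j) V z = P ((P ^^ j) V) z" by simp
  also have "\<dots> \<le> P (\<lambda>y. V y + of_nat j * ennreal D) z"
    using Suc by (intro Kop_mono_on) auto
  also have "\<dots> = P V z + of_nat j * ennreal D * P (\<lambda>_. 1) z"
    using Kop_add[of p S V] Kop_cmult[of p S "of_nat j * ennreal D" "\<lambda>_. 1"] by simp
  also have "\<dots> \<le> V z + ennreal D + of_nat j * ennreal D"
    using Suc.prems stoch bnd by (simp add: add_right_mono)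
  finally show ?case by (simp add: algebra_simps)
qed simp

lemma Kpow_le_Ppow: "(K ^^ j) V z \<le> (P ^^ j) V z"
proof (induction j arbitrary: z)
  case (Suc j)
  have "(K ^^ Suc j) V z \<le> K ((P ^^ j) V) z"
    using Suc by (simp add: Kop_mono_on)
  also have "\<dots> \<le> P ((P ^^ j) V) z" by (rule Kop_subset) auto
  finally show ?case by simp
qed simp


lemma foster_bound:
  assumes reach: "\<And>z. z \<in> S \<Longrightarrow> \<exists>k\<ge>1. \<exists>q>0. (K ^^ k) (\<lambda>_. 1) z + ennreal q \<le> 1"
    and F: "finite F"
    and drift: "\<And>z. z \<in> S - F \<Longrightarrow> P V z + 1 \<le> V z"
    and bnd: "\<And>z. z \<in> S \<Longrightarrow> P V z \<le> V z + ennreal D" and D: "D \<ge> 0"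
  shows "\<exists>B. B < \<infinity> \<and> (\<forall>N. \<forall>z\<in>S. Tt N z \<le> V z + B)"
proof -
  have "\<exists>m\<ge>1. \<exists>q>0. \<forall>f\<in>F \<inter> S. (K ^^ m) (\<lambda>_. 1) f + ennreal q \<le> 1"
    by (rule uniform_reach[OF F]) (rule reach)
  then obtain m q0 where mq0: "m \<ge> 1" "q0 > 0" "\<And>f. f \<in> F \<inter> S \<Longrightarrow> (K ^^ m) (\<lambda>_. 1) f + ennreal q0 \<le> 1"
    by blast
  define q where "q = min q0 1"
  have mq: "m \<ge> 1" "q > 0" "\<And>f. f \<in> F \<inter> S \<Longrightarrow> (K ^^ m) (\<lambda>_. 1) f + ennreal q \<le> 1"
    and q1: "q \<le> 1"
  proof -
    show "m \<ge> 1" "q > 0" "q \<le> 1" using mq0 by (auto simp: q_def)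
    fix f assume "f \<in> F \<inter> S"
    have "(K ^^ m) (\<lambda>_. 1) f + ennreal q \<le> (K ^^ m) (\<lambda>_. 1) f + ennreal q0"
      by (intro add_left_mono ennreal_leI) (simp add: q_def)
    then show "(K ^^ m) (\<lambda>_. 1) f + ennreal q \<le> 1" using mq0(3)[OF \<open>f \<in> F \<inter> S\<close>] by (rule order_trans)
  qed
  define B where "B = ennreal (real m * (1 + D) / q)"
  have Bq: "B * ennreal q = of_nat m + of_nat m * ennreal D"
  proof -
    have "B * ennreal q = ennreal (real m * (1 + D) / q * q)"
      unfolding B_def by (rule ennreal_mult[symmetric]) (use mq D in auto)
    also have "\<dots> = ennreal (real m + real m * D)"
    proof -
      have "real m * (1 + D) / q * q = real m + real m * D" using mq(2) by (simp add: field_simps)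
      then show ?thesis by simp
    qed
    also have "\<dots> = of_nat m + of_nat m * ennreal D"
      using D by (simp add: ennreal_plus ennreal_mult' ennreal_of_nat_eq_real_of_nat)
    finally show ?thesis .
  qed
  have mB: "of_nat m \<le> B"
  proof -
    have "real m \<le> real m * (1 + D) / q"
    proof -
      have "real m * q \<le> real m * (1 + D)" using q1 D by (intro mult_left_mono) auto
      then show ?thesis using mq(2) by (simp add: le_divide_eq)
    qed
    then show ?thesis unfolding B_def by (metis ennreal_leI ennreal_of_nat_eq_real_of_nat)
  qed
  have main: "\<forall>z\<in>S. Tt N z \<le> V z + B" for N
  proof (induction N rule: less_induct)
    case (less N)
    show ?case
    proof
      fix z assume zS: "z \<in> S"
      show "Tt N z \<le> V z + B"
      proof (cases "z \<in> F")
        case False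
        show ?thesis
        proof (cases N)
          case 0 then show ?thesis by (simp add: Tt_def)
        next
          case (Suc N')
          have "Tt N z = Tt 1 z + (K ^^ 1) (Tt N') z" using Tt_split[of 1 N' z] Suc by simp
          also have "Tt 1 z = 1" by (simp add: Tt_def)
          also have "(K ^^ 1) (Tt N') z \<le> K (\<lambda>y. V y + B) z"
            using less Suc by (auto intro!: Kop_mono_on)
          also have "K (\<lambda>y. V y + B) z = K V z + B * K (\<lambda>_. 1) z"
            using Kop_add[of p "S - {x}" V] Kop_cmult[of p "S - {x}" B "\<lambda>_. 1"] by simp
          also have "\<dots> \<le> P V z + B"
            by (intro add_mono Kop_subset) (auto intro: mult_left_le K1_le)
          finally have "Tt N z \<le> 1 + P V z + B" by (simp add: add.assoc add_left_mono)
          also have "\<dots> \<le> V z + B" using drift[of z] zS False by (simp add: add_right_mono add.commute)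
          finally show ?thesis .
        qed
      next
        case True
        show ?thesis
        proof (cases "N \<le> m")
          case True
          have "Tt N z \<le> of_nat m" using Tt_le[of N z] True by (meson of_nat_mono order_trans)
          also have "\<dots> \<le> B" by (rule mB)
          finally show ?thesis by (simp add: add_increasing)
        next
          case False
          define j where "j = N - m"
          have N: "N = m + j" "j < N" using False mq(1) by (auto simp: j_def)
          have e1: "Tt N z = Tt m z + (K ^^ m) (Tt j) z" using Tt_split N by simp
          have e2: "(K ^^ m) (Tt j) z \<le> (K ^^ m) (\<lambda>y. V y + B) z"
            using less N zS by (intro Kpow_mono_on[where S=S]) auto
          have e3: "(K ^^ m) (\<lambda>y. V y + B) z = (K ^^ m) V z + B * (K ^^ m) (\<lambda>_. 1) z"
          proof -
            have "(K ^^ m) (\<lambda>y. V y + B) z = (K ^^ m) V z + (K ^^ m) (\<lambda>_. B) z" by (rule Kpow_add)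
            also have "(K ^^ m) (\<lambda>_. B) z = B * (K ^^ m) (\<lambda>_. 1) z" by (rule Kpow_const)
            finally show ?thesis .
          qed
          have e4: "(K ^^ m) V z \<le> V z + of_nat m * ennreal D"
            using Kpow_le_Ppow[where j=m and V=V and z=z] Ppow_bound[OF bnd D zS, of m] by (meson order_trans)
          have "Tt N z \<le> of_nat m + ((K ^^ m) V z + B * (K ^^ m) (\<lambda>_. 1) z)"
            unfolding e1 using e2 e3 by (intro add_mono[OF Tt_le]) simp
          also have "\<dots> \<le> of_nat m + ((V z + of_nat m * ennreal D) + B * (K ^^ m) (\<lambda>_. 1) z)"
            using e4 by (intro add_left_mono add_right_mono)
          also have "\<dots> = V z + (of_nat m + of_nat m * ennreal D + B * (K ^^ m) (\<lambda>_. 1) z)"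
            by (simp only: ac_simps)
          also have "of_nat m + of_nat m * ennreal D + B * (K ^^ m) (\<lambda>_. 1) z
               = B * ((K ^^ m) (\<lambda>_. 1) z + ennreal q)"
            by (simp only: Bq distrib_left add.assoc add.commute)
          also have "B * ((K ^^ m) (\<lambda>_. 1) z + ennreal q) \<le> B * 1"
            using mq(3)[of z] \<open>z \<in> F\<close> zS by (intro mult_left_mono) auto
          finally show ?thesis by simp
        qed
      qed
    qed
  qed
  moreover have "B < \<infinity>" unfolding B_def by simp
  ultimately show ?thesis by blast
qed
end

context fchain
begin

lemma K1_plus_px: "z \<in> S \<Longrightarrow> K (\<lambda>_. 1) z + p z x = 1"
proof -
  assume zS: "z \<in> S"
  have "K (\<lambda>_. 1) z + p z x =
      (\<integral>\<^sup>+ y. p z y * indicator (S - {x}) y \<partial>count_space UNIV) + (\<integral>\<^sup>+ y. p z y * indicator {x} y \<partial>count_space UNIV)"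
    unfolding Kop_def by (simp add: nn_integral_count_space_indicator)
  also have "\<dots> = (\<integral>\<^sup>+ y. p z y * indicator S y \<partial>count_space UNIV)"
    by (subst nn_integral_add[symmetric]) (auto intro!: nn_integral_cong simp: indicator_def xS)
  also have "\<dots> = P (\<lambda>_. 1) z" unfolding Kop_def by (simp add: nn_integral_count_space_indicator)
  finally show ?thesis using stoch zS by simp
qed

lemma reach_step:
  assumes "z' \<in> S - {x}" "(K ^^ k) (\<lambda>_. 1) z' + q \<le> 1"
  shows "(K ^^ Suc k) (\<lambda>_. 1) z + p z z' * q \<le> 1"
proof -
  have "K (\<lambda>y. q * indicator {z'} y) z = (\<integral>\<^sup>+ y. (p z z' * q) * indicator {z'} y \<partial>count_space UNIV)"
    unfolding Kop_def using assms(1)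
    by (subst nn_integral_count_space_indicator) (auto intro!: nn_integral_cong simp: indicator_def)
  also have "\<dots> = p z z' * q" by (simp add: nn_integral_cmult_indicator)
  finally have "p z z' * q = K (\<lambda>y. q * indicator {z'} y) z" by simp
  then have "(K ^^ Suc k) (\<lambda>_. 1) z + p z z' * q = K (\<lambda>y. (K ^^ k) (\<lambda>_. 1) y + q * indicator {z'} y) z"
    by (simp add: Kop_add)
  also have "\<dots> \<le> K (\<lambda>_. 1) z"
    using assms Kpow1_le by (intro Kop_mono_on) (auto simp: indicator_def)
  also have "\<dots> \<le> 1" by (rule K1_le)
  finally show ?thesis .
qed

lemma reach_all:
  assumes irr: "\<And>z. z \<in> S \<Longrightarrow> (z, x) \<in> {(a, b). a \<in> S \<and> b \<in> S \<and> a \<noteq> b \<and> p a b > 0}\<^sup>*"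
    and succ: "\<exists>y. y \<in> S \<and> y \<noteq> x \<and> p x y > 0"
    and z: "z \<in> S"
  shows "\<exists>k\<ge>1. \<exists>q>0. (K ^^ k) (\<lambda>_. 1) z + ennreal q \<le> 1"
proof -
  let ?R = "{(a, b). a \<in> S \<and> b \<in> S \<and> a \<noteq> b \<and> p a b > 0}"
  let ?Q = "\<lambda>z. \<exists>k\<ge>1. \<exists>q>0. (K ^^ k) (\<lambda>_. 1) z + q \<le> (1::ennreal)"
  have stepQ: "?Q y" if yw: "(y, w) \<in> ?R" and wQ: "w = x \<or> ?Q w" for y w
  proof (cases "w = x")
    case True
    then have "(K ^^ 1) (\<lambda>_. 1) y + p y w \<le> 1" using K1_plus_px yw by simp
    then show ?thesis using yw True by (intro exI[of _ 1] exI[of _ "p y w"]) auto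
  next
    case False
    then obtain k q where kq: "k \<ge> 1" "q > 0" "(K ^^ k) (\<lambda>_. 1) w + q \<le> 1" using wQ by blast
    have "(K ^^ Suc k) (\<lambda>_. 1) y + p y w * q \<le> 1"
      using False yw kq by (intro reach_step) auto
    moreover have "p y w * q > 0" using yw kq by (simp add: ennreal_zero_less_mult_iff)
    ultimately show ?thesis by (intro exI[of _ "Suc k"] exI[of _ "p y w * q"]) auto
  qed
  have Q: "?Q z"
  proof (cases "z = x")
    case True
    obtain y where y: "y \<in> S" "y \<noteq> x" "p x y > 0" using succ by blast
    have "(y, x) \<in> ?R\<^sup>*" using irr y by blast
    then have "y = x \<or> ?Q y"
    proof (induction rule: converse_rtrancl_induct)
      case base then show ?case by simp
    next
      case (step a b) then show ?case using stepQ[OF step(1) step(3)] by simp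
    qed
    then have "?Q x" using stepQ[of x y] y xS by auto
    then show ?thesis using True by simp
  next
    case False
    have "(z, x) \<in> ?R\<^sup>*" using irr z by blast
    then have "z = x \<or> ?Q z"
    proof (induction rule: converse_rtrancl_induct)
      case base then show ?case by simp
    next
      case (step a b) then show ?case using stepQ[OF step(1) step(3)] by simp
    qed
    then show ?thesis using False by simp
  qed
  then obtain k q where kq: "k \<ge> 1" "q > 0" "(K ^^ k) (\<lambda>_. 1) z + q \<le> 1" by blast
  have "q \<le> (K ^^ k) (\<lambda>_. 1) z + q" by (rule add_increasing) auto
  then have "q \<le> 1" using kq(3) by (rule order_trans)
  then have "q \<noteq> top" using top.extremum_unique[of q] by (auto simp: top_unique)
  then have "q = ennreal (enn2real q)" by (simp add: ennreal_enn2real_if) 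
  moreover have "enn2real q > 0" using kq(2) \<open>q \<le> 1\<close>
    by (simp add: enn2real_positive_iff less_top_ennreal[symmetric] order_le_less_trans)
  ultimately show ?thesis using kq by (intro exI[of _ k] exI[of _ "enn2real q"]) auto
qed

end

definition pp :: "('s \<Rightarrow> 's \<Rightarrow> ennreal) \<Rightarrow> 's list \<Rightarrow> ennreal" where
  "pp p xs = (\<Prod>i<length xs - 1. p (xs ! i) (xs ! Suc i))"

lemma pp_single[simp]: "pp p [a] = 1" by (simp add: pp_def)

lemma pp_Cons2: "pp p (a # b # ys) = p a b * pp p (b # ys)"
  unfolding pp_def by (simp del: prod.lessThan_Suc add: prod.lessThan_Suc_shift)

lemma pp_snoc: "xs \<noteq> [] \<Longrightarrow> pp p (xs @ [a]) = pp p xs * p (last xs) a"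
proof (induction xs rule: induct_list012)
  case (2 b) then show ?case by (simp add: pp_def)
next
  case (3 b c rest) then show ?case by (simp add: pp_Cons2 mult.assoc)
qed simp

definition Elen :: "'s set \<Rightarrow> nat \<Rightarrow> 's list set" where
  "Elen A n = {ys. length ys = n \<and> set ys \<subseteq> A}"

lemma Elen_Suc_bij: "bij_betw (\<lambda>(y, ys). y # ys) (A \<times> Elen A n) (Elen A (Suc n))"
  unfolding bij_betw_def inj_on_def Elen_def
proof (intro conjI ballI impI)
  show "(\<lambda>(y, ys). y # ys) ` (A \<times> {ys. length ys = n \<and> set ys \<subseteq> A}) = {ys. length ys = Suc n \<and> set ys \<subseteq> A}"
  proof (intro set_eqI iffI)
    fix ys assume "ys \<in> {ys. length ys = Suc n \<and> set ys \<subseteq> A}"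
    then show "ys \<in> (\<lambda>(y, ys). y # ys) ` (A \<times> {ys. length ys = n \<and> set ys \<subseteq> A})"
      by (cases ys) (auto intro!: image_eqI[where x="(hd ys, tl ys)"])
  qed auto
qed auto

lemma bridge:
  "(\<integral>\<^sup>+ ys. pp p (z # ys) * g (last (z # ys)) \<partial>count_space (Elen A n)) = (Kop p A ^^ n) g z"
proof (induction n arbitrary: z)
  case 0
  have "Elen A 0 = {[]}" by (auto simp: Elen_def)
  then show ?case by (simp add: nn_integral_count_space_finite)
next
  case (Suc n)
  let ?f = "\<lambda>ys. pp p (z # ys) * g (last (z # ys))"
  have "(\<integral>\<^sup>+ ys. ?f ys \<partial>count_space (Elen A (Suc n))) =
        (\<integral>\<^sup>+ yys. ?f ((\<lambda>(y, ys). y # ys) yys) \<partial>count_space (A \<times> Elen A n))"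
    by (rule nn_integral_bij_count_space[OF Elen_Suc_bij, symmetric])
  also have "\<dots> = (\<integral>\<^sup>+ yys. (p z (fst yys) * pp p (fst yys # snd yys) * g (last (fst yys # snd yys)))
          * indicator (A \<times> Elen A n) yys \<partial>count_space UNIV)"
    by (subst nn_integral_count_space_indicator)
       (auto intro!: nn_integral_cong simp: pp_Cons2 mult.assoc split: prod.splits)
  also have "\<dots> = (\<integral>\<^sup>+ y. \<integral>\<^sup>+ ys. (p z y * pp p (y # ys) * g (last (y # ys)))
          * indicator (A \<times> Elen A n) (y, ys) \<partial>count_space UNIV \<partial>count_space UNIV)"
  proof -
    define F where "F = (\<lambda>yys. (p z (fst yys) * pp p (fst yys # snd yys) * g (last (fst yys # snd yys)))
          * indicator (A \<times> Elen A n) yys)"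
    have "(\<integral>\<^sup>+ y. \<integral>\<^sup>+ ys. F (y, ys) \<partial>count_space UNIV \<partial>count_space UNIV) = integral\<^sup>N (count_space UNIV) F"
      by (rule nn_integral_fst_count_space)
    then show ?thesis unfolding F_def by simp
  qed
  also have "\<dots> = (\<integral>\<^sup>+ y. p z y * indicator A y * (\<integral>\<^sup>+ ys. pp p (y # ys) * g (last (y # ys)) * indicator (Elen A n) ys
          \<partial>count_space UNIV) \<partial>count_space UNIV)"
    by (intro nn_integral_cong, subst nn_integral_cmult[symmetric])
       (auto intro!: nn_integral_cong simp: indicator_times ac_simps)
  also have "\<dots> = (\<integral>\<^sup>+ y. p z y * indicator A y * (Kop p A ^^ n) g y \<partial>count_space UNIV)"
    using Suc by (simp add: nn_integral_count_space_indicator[symmetric])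
  also have "\<dots> = (Kop p A ^^ Suc n) g z"
    by (simp add: Kop_def nn_integral_count_space_indicator ac_simps)
  finally show ?case .
qed

lemma Elen_disjoint: "disjoint_family (Elen A)"
  unfolding disjoint_family_on_def Elen_def by auto

lemma exc_Union: "excursions S x = (\<Union>n. Elen (S - {x}) n)"
  unfolding excursions_def Elen_def by auto

lemma nn_integral_exc:
  "(\<integral>\<^sup>+ ys. f ys \<partial>count_space (excursions S x)) = (\<Sum>n. \<integral>\<^sup>+ ys. f ys \<partial>count_space (Elen (S - {x}) n))"
proof -
  have "(\<integral>\<^sup>+ ys. f ys \<partial>count_space (excursions S x)) = (\<integral>\<^sup>+ ys \<in> (\<Union>n. Elen (S - {x}) n). f ys \<partial>count_space UNIV)"
    by (simp add: nn_integral_count_space_indicator exc_Union)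
  also have "\<dots> = (\<Sum>n. \<integral>\<^sup>+ ys \<in> Elen (S - {x}) n. f ys \<partial>count_space UNIV)"
    by (rule nn_integral_disjoint_family) (auto simp: Elen_disjoint)
  also have "\<dots> = (\<Sum>n. \<integral>\<^sup>+ ys. f ys \<partial>count_space (Elen (S - {x}) n))"
    by (simp add: nn_integral_count_space_indicator)
  finally show ?thesis .
qed

lemma path_prob_pp: "path_prob q S xs = pp (jump_prob q S) xs"
  by (simp add: path_prob_def pp_def)

lemma sum_list_le_len: "(\<And>z. z \<in> set zs \<Longrightarrow> f z \<le> c) \<Longrightarrow> sum_list (map f zs) \<le> of_nat (length zs) * (c::ennreal)"
  by (induction zs) (auto simp: distrib_right intro: add_mono)

lemma jump_stoch:
  assumes "z \<in> S" "0 < out_rate q S z" "out_rate q S z < \<infinity>"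
  shows "Kop (jump_prob q S) S (\<lambda>_. 1) z = 1"
proof -
  have "Kop (jump_prob q S) S (\<lambda>_. 1) z = (\<integral>\<^sup>+ y. ennreal (q z y) / out_rate q S z * indicator (S - {z}) y \<partial>count_space UNIV)"
    unfolding Kop_def using assms(1)
    by (subst nn_integral_count_space_indicator) (auto intro!: nn_integral_cong simp: jump_prob_def indicator_def)
  also have "\<dots> = (\<integral>\<^sup>+ y. ennreal (q z y) * indicator (S - {z}) y / out_rate q S z \<partial>count_space UNIV)"
    by (intro nn_integral_cong) (simp add: indicator_def)
  also have "\<dots> = out_rate q S z / out_rate q S z"
    by (subst nn_integral_divide) (auto simp: out_rate_def nn_integral_count_space_indicator)
  also have "\<dots> = 1" using assms by (intro ennreal_divide_self) auto
  finally show ?thesis .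
qed

lemma pos_rec_foster:
  assumes xS: "x \<in> S" and b: "b > 0"
    and out: "\<And>z. z \<in> S \<Longrightarrow> ennreal b \<le> out_rate q S z \<and> out_rate q S z < \<infinity>"
    and irr: "ctmc_irreducible q S"
    and succ: "\<And>z. z \<in> S \<Longrightarrow> \<exists>y\<in>S. y \<noteq> z \<and> q z y > 0"
    and F: "finite F"
    and drift: "\<And>z. z \<in> S - F \<Longrightarrow> Kop (jump_prob q S) S V z + 1 \<le> V z"
    and bnd: "\<And>z. z \<in> S \<Longrightarrow> Kop (jump_prob q S) S V z \<le> V z + ennreal D" and D: "D \<ge> 0"
    and Vfin: "V x < \<infinity>"
  shows "ctmc_positive_recurrent q S x"
proof -
  let ?p = "jump_prob q S"
  have outpos: "0 < out_rate q S z" if "z \<in> S" for z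
    using out[OF that] b by (meson ennreal_less_zero_iff order_less_le_trans)
  interpret fchain ?p S x
    by unfold_locales (auto simp: jump_prob_def xS intro!: jump_stoch outpos dest: out)
  have ppos: "?p a b > 0" if "a \<in> S" "b \<in> S" "a \<noteq> b" "q a b > 0" for a b
    using that out[of a] by (auto simp: jump_prob_def ennreal_zero_less_divide)
  have irrp: "(z, x) \<in> {(a, b). a \<in> S \<and> b \<in> S \<and> a \<noteq> b \<and> ?p a b > 0}\<^sup>*" if "z \<in> S" for z
  proof -
    have "(z, x) \<in> {(a, b). a \<in> S \<and> b \<in> S \<and> a \<noteq> b \<and> q a b > 0}\<^sup>*"
      using irr that xS unfolding ctmc_irreducible_def by blast
    moreover have "{(a, b). a \<in> S \<and> b \<in> S \<and> a \<noteq> b \<and> q a b > 0} \<subseteq> {(a, b). a \<in> S \<and> b \<in> S \<and> a \<noteq> b \<and> ?p a b > 0}"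
      using ppos by auto
    ultimately show ?thesis using rtrancl_mono by blast
  qed
  have succp: "\<exists>y. y \<in> S \<and> y \<noteq> x \<and> ?p x y > 0"
    using succ[OF xS] ppos xS by blast
  have reach: "\<And>z. z \<in> S \<Longrightarrow> \<exists>k\<ge>1. \<exists>q>0. (K ^^ k) (\<lambda>_. 1) z + ennreal q \<le> 1"
    using reach_all[OF irrp succp] by blast
  obtain B where B: "B < \<infinity>" "\<And>N z. z \<in> S \<Longrightarrow> Tt N z \<le> V z + B"
    using foster_bound[OF reach F drift bnd D] by blast
  define Bd where "Bd = V x + B"
  have Bd: "Bd < \<infinity>" "\<And>N. Tt N x \<le> Bd" using B Vfin xS by (auto simp: Bd_def)
  define a where "a n = (K ^^ n) (\<lambda>w. ?p w x) x" for n
  define A where "A n = (K ^^ n) (\<lambda>_. 1) x" for n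
  have I1: "a n + A (Suc n) = A n" for n
  proof -
    have "a n + A (Suc n) = (K ^^ n) (\<lambda>w. ?p w x + K (\<lambda>_. 1) w) x"
      unfolding a_def A_def by (simp add: Kpow_add funpow_Suc_right del: funpow.simps)
    also have "\<dots> = A n" unfolding A_def
      using K1_plus_px xS
      by (intro antisym Kpow_mono_on[where S=S]) (auto simp: add.commute)
    finally show ?thesis .
  qed
  have I2: "(\<Sum>n<N. a n) + A N = 1" for N
  proof (induction N)
    case 0 then show ?case by (simp add: A_def)
  next
    case (Suc N) then show ?case using I1[of N] by (simp add: add.assoc)
  qed
  have I3: "(\<Sum>n<N. of_nat (Suc n) * a n) + of_nat N * A N = Tt N x" for N
  proof (induction N)
    case 0 then show ?case by (simp add: Tt_def)
  next
    case (Suc N)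
    have "(\<Sum>n<Suc N. of_nat (Suc n) * a n) + of_nat (Suc N) * A (Suc N)
        = (\<Sum>n<N. of_nat (Suc n) * a n) + of_nat (Suc N) * (a N + A (Suc N))"
      by (simp add: distrib_left add.assoc)
    also have "\<dots> = ((\<Sum>n<N. of_nat (Suc n) * a n) + of_nat N * A N) + A N"
      by (simp add: I1 distrib_right add.assoc add.commute)
    also have "\<dots> = Tt (Suc N) x" using Suc by (simp add: Tt_def A_def)
    finally show ?case .
  qed
  have ret: "return_prob q S x = (\<Sum>n. a n)"
  proof -
    have "return_prob q S x = (\<Sum>n. \<integral>\<^sup>+ ys. path_prob q S (x # ys @ [x]) \<partial>count_space (Elen (S - {x}) n))"
      unfolding return_prob_def by (rule nn_integral_exc)
    also have "\<dots> = (\<Sum>n. \<integral>\<^sup>+ ys. pp ?p (x # ys) * ?p (last (x # ys)) x \<partial>count_space (Elen (S - {x}) n))"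
      by (simp add: path_prob_pp pp_snoc[where xs="x # _", simplified])
    also have "\<dots> = (\<Sum>n. a n)" unfolding a_def
      using bridge[where p="?p" and z=x and g="\<lambda>w. ?p w x" and A="S - {x}"] by simp
    finally show ?thesis .
  qed
  have R1: "return_prob q S x = 1"
  proof (rule antisym)
    show "return_prob q S x \<le> 1" unfolding ret suminf_eq_SUP
    proof (intro SUP_least)
      fix N have "(\<Sum>n<N. a n) \<le> (\<Sum>n<N. a n) + A N" by (rule add_increasing2) auto
      then show "(\<Sum>n<N. a n) \<le> 1" using I2[of N] by simp
    qed
    show "1 \<le> return_prob q S x"
    proof (rule ennreal_le_epsilon)
      fix e :: real assume e: "0 < e"
      obtain r where r: "Bd = ennreal r" "r \<ge> 0" using Bd(1) by (cases Bd) auto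
      obtain N :: nat where N: "r / e < real N" using reals_Archimedean2 by blast
      have "0 \<le> r / e" using r e by simp
      then have Npos: "N > 0" using N by (cases N) auto
      have "A N \<le> 1" unfolding A_def by (rule Kpow1_le)
      then obtain t where t: "A N = ennreal t" "t \<ge> 0" by (cases "A N") (auto simp: top_unique)
      have "of_nat N * A N \<le> (\<Sum>n<N. of_nat (Suc n) * a n) + of_nat N * A N" by (rule add_increasing) auto
      also have "\<dots> = Tt N x" by (rule I3)
      also have "\<dots> \<le> Bd" by (rule Bd(2))
      finally have "of_nat N * A N \<le> Bd" .
      then have "ennreal (real N * t) \<le> ennreal r" using t r
        by (simp add: ennreal_mult' ennreal_of_nat_eq_real_of_nat)
      then have "real N * t \<le> r" using r by (simp add: ennreal_le_iff)
      then have "t \<le> r / real N" using Npos by (simp add: le_divide_eq mult.commute)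
      also have "r / real N \<le> e" using N e Npos by (simp add: divide_le_eq mult.commute pos_divide_less_eq less_imp_le)
      finally have "t \<le> e" .
      have "1 = (\<Sum>n<N. a n) + A N" using I2 by simp
      also have "\<dots> \<le> return_prob q S x + ennreal e" unfolding ret
        using \<open>t \<le> e\<close> t by (intro add_mono sum_le_suminf) (auto simp: summableI)
      finally show "1 \<le> return_prob q S x + ennreal e" .
    qed
  qed
  have hb: "1 / out_rate q S z \<le> ennreal (1 / b)" if zS: "z \<in> S" for z
  proof -
    obtain r where r: "out_rate q S z = ennreal r" "r \<ge> b" using out[OF zS] b
      by (cases "out_rate q S z") (auto simp: ennreal_le_iff)
    have "1 / out_rate q S z = ennreal (1 / r)" using divide_ennreal[of 1 r] r b by simp
    also have "\<dots> \<le> ennreal (1 / b)" using r b by (intro ennreal_leI) (simp add: frac_le)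
    finally show ?thesis .
  qed
  have "mean_return_time q S x \<le> (\<Sum>n. \<integral>\<^sup>+ ys. pp ?p (x # ys) * ?p (last (x # ys)) x * (of_nat (Suc n) * ennreal (1 / b)) \<partial>count_space (Elen (S - {x}) n))"
    unfolding mean_return_time_def nn_integral_exc
  proof (intro suminf_le nn_integral_mono summableI)
    fix n ys assume ys: "ys \<in> space (count_space (Elen (S - {x}) n))"
    have "(\<Sum>z\<leftarrow>x # ys. 1 / out_rate q S z) \<le> of_nat (length (x # ys)) * ennreal (1 / b)"
      using ys xS by (intro sum_list_le_len hb) (auto simp: Elen_def)
    then show "path_prob q S (x # ys @ [x]) * (\<Sum>z\<leftarrow>x # ys. 1 / out_rate q S z)
        \<le> pp ?p (x # ys) * ?p (last (x # ys)) x * (of_nat (Suc n) * ennreal (1 / b))"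
      using ys by (auto simp: path_prob_pp pp_snoc[where xs="x # _", simplified] Elen_def intro: mult_left_mono)
  qed
  also have "\<dots> = (\<Sum>n. ennreal (1 / b) * (of_nat (Suc n) * a n))"
  proof (rule suminf_cong)
    fix n
    have br: "(\<integral>\<^sup>+ ys. pp ?p (x # ys) * ?p (last (x # ys)) x \<partial>count_space (Elen (S - {x}) n)) = a n"
      unfolding a_def using bridge[where p="?p" and z=x and g="\<lambda>w. ?p w x" and A="S - {x}"] by simp
    show "(\<integral>\<^sup>+ ys. pp ?p (x # ys) * ?p (last (x # ys)) x * (of_nat (Suc n) * ennreal (1 / b)) \<partial>count_space (Elen (S - {x}) n))
        = ennreal (1 / b) * (of_nat (Suc n) * a n)"
      by (subst nn_integral_multc) (simp_all del: last.simps add: br mult_ac)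
  qed
  also have "\<dots> = ennreal (1 / b) * (\<Sum>n. of_nat (Suc n) * a n)"
    by (rule ennreal_suminf_cmult)
  also have "(\<Sum>n. of_nat (Suc n) * a n) \<le> Bd"
    unfolding suminf_eq_SUP
  proof (intro SUP_least)
    fix N
    have "(\<Sum>n<N. of_nat (Suc n) * a n) \<le> (\<Sum>n<N. of_nat (Suc n) * a n) + of_nat N * A N" by (rule add_increasing2) auto
    also have "\<dots> = Tt N x" by (rule I3)
    finally have "(\<Sum>n<N. of_nat (Suc n) * a n) \<le> Tt N x" .
    then show "(\<Sum>n<N. of_nat (Suc n) * a n) \<le> Bd" using Bd(2) by (rule order_trans)
  qed
  finally have "mean_return_time q S x \<le> ennreal (1 / b) * Bd" by (simp add: mult_left_mono)
  also have "\<dots> < \<infinity>" using Bd(1) by (simp add: ennreal_mult_less_top)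
  finally show ?thesis unfolding ctmc_positive_recurrent_def using R1 by simp
qed

lemma quad_update:
  fixes f :: "nat \<Rightarrow> real"
  assumes k: "k < N" and sym: "\<And>i j. i < N \<Longrightarrow> j < N \<Longrightarrow> w i j = w j i" and wkk: "w k k = 1"
  shows "(\<Sum>i<N. \<Sum>j<N. (f i + (if i = k then d else 0)) * (f j + (if j = k then d else 0)) * w i j)
       = (\<Sum>i<N. \<Sum>j<N. f i * f j * w i j) + 2 * d * (\<Sum>j<N. f j * w k j) + d^2"
proof -
  have split: "(f i + (if i = k then d else 0)) * (f j + (if j = k then d else 0)) * w i j
      = f i * f j * w i j + (if i = k then d * f j * w k j else 0) + (if j = k then d * f i * w i k else 0)
        + (if i = k \<and> j = k then d^2 * w k k else 0)" for i j
    by (auto simp: algebra_simps power2_eq_square)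
  have s1: "(\<Sum>i<N. \<Sum>j<N. (if i = k then d * f j * w k j else 0)) = d * (\<Sum>j<N. f j * w k j)"
  proof -
    have "(\<Sum>i<N. \<Sum>j<N. (if i = k then d * f j * w k j else 0)) = (\<Sum>i<N. if i = k then (\<Sum>j<N. d * f j * w k j) else 0)"
      by (intro sum.cong) auto
    also have "\<dots> = (\<Sum>j<N. d * f j * w k j)" using k by (simp add: sum.delta)
    finally show ?thesis by (simp add: sum_distrib_left mult.assoc)
  qed
  have s2: "(\<Sum>i<N. \<Sum>j<N. (if j = k then d * f i * w i k else 0)) = d * (\<Sum>j<N. f j * w k j)"
  proof -
    have "(\<Sum>i<N. \<Sum>j<N. (if j = k then d * f i * w i k else 0)) = (\<Sum>i<N. d * f i * w i k)"
      using k by (simp add: sum.delta')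
    also have "\<dots> = (\<Sum>i<N. d * (f i * w k i))" using sym k by (intro sum.cong) auto
    finally show ?thesis by (simp add: sum_distrib_left)
  qed
  have s3: "(\<Sum>i<N. \<Sum>j<N. (if i = k \<and> j = k then d^2 * w k k else 0)) = d^2"
  proof -
    have "(\<Sum>i<N. \<Sum>j<N. (if i = k \<and> j = k then d^2 * w k k else 0)) = (\<Sum>i<N. if i = k then (\<Sum>j<N. if j = k then d^2 else 0) else 0)"
      using wkk by (intro sum.cong) auto
    also have "\<dots> = d^2" using k by (simp add: sum.delta)
    finally show ?thesis .
  qed
  show ?thesis
    unfolding split sum.distrib s1 s2 s3 by simp
qed

lemma tdist1_shift: "tdist1 Q (s * u + 2 * Q * of_int k0) = tdist1 Q u" if "s = 1 \<or> s = -1"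
proof -
  have "range (\<lambda>k::int. \<bar>s * u + 2 * Q * of_int k0 - 2 * Q * of_int k\<bar>) = range (\<lambda>k::int. \<bar>u - 2 * Q * of_int k\<bar>)"
  proof (intro set_eqI iffI)
    fix y assume "y \<in> range (\<lambda>k::int. \<bar>s * u + 2 * Q * of_int k0 - 2 * Q * of_int k\<bar>)"
    then obtain k where k: "y = \<bar>s * u + 2 * Q * of_int k0 - 2 * Q * of_int k\<bar>" by blast
    show "y \<in> range (\<lambda>k::int. \<bar>u - 2 * Q * of_int k\<bar>)"
    proof (cases "s = 1")
      case True
      then show ?thesis using k by (intro image_eqI[where x="k - k0"]) (auto simp: algebra_simps)
    next
      case False
      then have "s = -1" using that by simp
      then show ?thesis using k by (intro image_eqI[where x="k0 - k"]) (auto simp: algebra_simps abs_minus_commute)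
    qed
  next
    fix y assume "y \<in> range (\<lambda>k::int. \<bar>u - 2 * Q * of_int k\<bar>)"
    then obtain k where k: "y = \<bar>u - 2 * Q * of_int k\<bar>" by blast
    show "y \<in> range (\<lambda>k::int. \<bar>s * u + 2 * Q * of_int k0 - 2 * Q * of_int k\<bar>)"
    proof (cases "s = 1")
      case True
      then show ?thesis using k by (intro image_eqI[where x="k + k0"]) (auto simp: algebra_simps)
    next
      case False
      then have "s = -1" using that by simp
      then show ?thesis using k by (intro image_eqI[where x="k0 - k"]) (auto simp: algebra_simps abs_minus_commute)
    qed
  qed
  then show ?thesis unfolding tdist1_def by simp
qed

lemma tdist1_neg: "tdist1 Q (- u) = tdist1 Q u"
  using tdist1_shift[of "-1" Q u 0] by simp

lemma tdist1_per: "tdist1 Q (u + 2 * Q * of_int k0) = tdist1 Q u"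
  using tdist1_shift[of 1 Q u k0] by simp

lemma tdist1_zero: "tdist1 Q 0 = 0"
  unfolding tdist1_def by (rule cInf_eq_minimum[where z=0]) (auto intro: image_eqI[where x=0])

lemma torus_dist_nonneg: "torus_dist Q b b' \<ge> 0" by (simp add: torus_dist_def)

lemma torus_dist_self: "torus_dist Q b b = 0" by (simp add: torus_dist_def tdist1_zero)

lemma torus_dist_sym: "torus_dist Q b b' = torus_dist Q b' b"
proof -
  have "fst b' - fst b = - (fst b - fst b')" "snd b' - snd b = - (snd b - snd b')" by auto
  then show ?thesis unfolding torus_dist_def by (simp only: tdist1_neg)
qed

lemma torus_dist_shift:
  assumes "fst b - fst b' = fst d - fst d' + 2 * Q * of_int ka"
      and "snd b - snd b' = snd d - snd d' + 2 * Q * of_int kb"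
  shows "torus_dist Q b b' = torus_dist Q d d'"
  unfolding torus_dist_def assms by (simp only: tdist1_per)

definition Ls :: "(real \<Rightarrow> real) \<Rightarrow> real \<Rightarrow> real \<Rightarrow> real \<times> real \<Rightarrow> real \<times> real \<Rightarrow> real set" where
  "Ls l Q eps a a' = {l (torus_dist Q b b') | b b'. b \<in> cell_closure eps a \<and> b' \<in> cell_closure eps a'}"

lemma l_eps_Ls: "l_eps l Q eps a a' = Sup (Ls l Q eps a a')"
  unfolding l_eps_def Ls_def by simp

lemma Ls_sym_sub: "Ls l Q eps a a' \<subseteq> Ls l Q eps a' a"
proof
  fix y assume "y \<in> Ls l Q eps a a'"
  then obtain b b' where bb: "y = l (torus_dist Q b b')" "b \<in> cell_closure eps a" "b' \<in> cell_closure eps a'"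
    unfolding Ls_def by blast
  then have "y = l (torus_dist Q b' b)" by (simp add: torus_dist_sym)
  then show "y \<in> Ls l Q eps a' a" unfolding Ls_def using bb by blast
qed

lemma Ls_sym: "Ls l Q eps a a' = Ls l Q eps a' a"
  using Ls_sym_sub by blast

lemma l_eps_sym: "l_eps l Q eps a a' = l_eps l Q eps a' a"
  by (simp add: l_eps_Ls Ls_sym)

lemma Ls_shift_sub:
  assumes "fst a - fst a' = fst c - fst c' + 2 * Q * of_int ka"
      and "snd a - snd a' = snd c - snd c' + 2 * Q * of_int kb"
  shows "Ls l Q eps a a' \<subseteq> Ls l Q eps c c'"
proof
  fix y assume "y \<in> Ls l Q eps a a'"
  then obtain b b' where bb: "y = l (torus_dist Q b b')" "b \<in> cell_closure eps a" "b' \<in> cell_closure eps a'"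
    unfolding Ls_def by blast
  define d where "d = (fst b - fst a + fst c, snd b - snd a + snd c)"
  define d' where "d' = (fst b' - fst a' + fst c', snd b' - snd a' + snd c')"
  have "d \<in> cell_closure eps c" "d' \<in> cell_closure eps c'"
    using bb unfolding cell_closure_def d_def d'_def by auto
  moreover have "torus_dist Q b b' = torus_dist Q d d'"
    by (rule torus_dist_shift[where ka=ka and kb=kb]) (use assms in \<open>auto simp: d_def d'_def algebra_simps\<close>)
  ultimately have "y = l (torus_dist Q d d') \<and> d \<in> cell_closure eps c \<and> d' \<in> cell_closure eps c'"
    using bb by simp
  then show "y \<in> Ls l Q eps c c'" unfolding Ls_def by blast
qed

lemma l_eps_shift:
  assumes "fst a - fst a' = fst c - fst c' + 2 * Q * of_int ka"
      and "snd a - snd a' = snd c - snd c' + 2 * Q * of_int kb"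
  shows "l_eps l Q eps a a' = l_eps l Q eps c c'"
proof -
  have "Ls l Q eps a a' \<subseteq> Ls l Q eps c c'" by (rule Ls_shift_sub[OF assms])
  moreover have "Ls l Q eps c c' \<subseteq> Ls l Q eps a a'"
    by (rule Ls_shift_sub[where ka="-ka" and kb="-kb"]) (use assms in auto)
  ultimately show ?thesis by (simp add: l_eps_Ls)
qed

locale lfun =
  fixes l :: "real \<Rightarrow> real" and Q eps :: real
  assumes nonneg: "\<forall>r\<ge>0. l r \<ge> 0" and l0: "l 0 = 1"
    and mono: "\<forall>r s. 0 \<le> r \<longrightarrow> r \<le> s \<longrightarrow> l s \<le> l r"
    and eps: "eps > 0"
begin

lemma Ls_bounds: "y \<in> Ls l Q eps a a' \<Longrightarrow> 0 \<le> y \<and> y \<le> 1"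
  unfolding Ls_def using nonneg mono l0 torus_dist_nonneg by fastforce

lemma Ls_ne: "l (torus_dist Q a a') \<in> Ls l Q eps a a'"
  unfolding Ls_def cell_closure_def using eps by (intro CollectI exI[of _ a] exI[of _ a']) auto

lemma l_eps_le1: "l_eps l Q eps a a' \<le> 1"
  unfolding l_eps_Ls
proof (rule cSup_least)
  show "Ls l Q eps a a' \<noteq> {}" using Ls_ne by blast
qed (use Ls_bounds in blast)

lemma l_eps_upper: "y \<in> Ls l Q eps a a' \<Longrightarrow> y \<le> l_eps l Q eps a a'"
  unfolding l_eps_Ls
proof (rule cSup_upper)
  show "bdd_above (Ls l Q eps a a')" using Ls_bounds by (intro bdd_aboveI[where M=1]) blast
qed

lemma l_eps_nonneg: "0 \<le> l_eps l Q eps a a'"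
  using l_eps_upper[OF Ls_ne, of a a'] Ls_bounds[OF Ls_ne, of a a'] by linarith

lemma l_eps_diag: "l_eps l Q eps a a = 1"
  using l_eps_upper[OF Ls_ne, of a a] l_eps_le1[of a a] by (simp add: torus_dist_self l0)

end

context lfun
begin

lemma lv_shift:
  assumes meps: "real m * eps = 2 * Q" and m: "m > 0" and i: "i < m^2" and j: "j < m^2"
  defines "r1 \<equiv> (int (i mod m) - int (j mod m)) mod int m"
      and "r2 \<equiv> (int (i div m) - int (j div m)) mod int m"
  shows "l_eps l Q eps (cell_center eps m i) (cell_center eps m j)
       = l_eps l Q eps (cell_center eps m (nat r1 + m * nat r2)) (cell_center eps m 0)"
proof -
  have r1: "0 \<le> r1" "r1 < int m" using m by (auto simp: r1_def)
  have r2: "0 \<le> r2" "r2 < int m" using m by (auto simp: r2_def)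
  have mod1: "(nat r1 + m * nat r2) mod m = nat r1" using r1 by (simp add: nat_less_iff)
  have div1: "(nat r1 + m * nat r2) div m = nat r2" using r1 m by (simp add: nat_less_iff)
  define k1 where "k1 = (int (i mod m) - int (j mod m)) div int m"
  define k2 where "k2 = (int (i div m) - int (j div m)) div int m"
  have e1: "int (i mod m) - int (j mod m) = r1 + int m * k1"
    unfolding r1_def k1_def by simp
  have e2: "int (i div m) - int (j div m) = r2 + int m * k2"
    unfolding r2_def k2_def by simp
  have e1r: "real (i mod m) - real (j mod m) = real (nat r1) + real m * of_int k1"
    using arg_cong[OF e1, of real_of_int] r1 by simp
  have e2r: "real (i div m) - real (j div m) = real (nat r2) + real m * of_int k2"
    using arg_cong[OF e2, of real_of_int] r2 by simp
  show ?thesis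
  proof (rule l_eps_shift[where ka=k1 and kb=k2])
    show "fst (cell_center eps m i) - fst (cell_center eps m j) =
      fst (cell_center eps m (nat r1 + m * nat r2)) - fst (cell_center eps m 0) + 2 * Q * of_int k1"
      unfolding cell_center_def mod1 using e1r meps[symmetric]
      by (simp add: right_diff_distrib[symmetric] algebra_simps)
    show "snd (cell_center eps m i) - snd (cell_center eps m j) =
      snd (cell_center eps m (nat r1 + m * nat r2)) - snd (cell_center eps m 0) + 2 * Q * of_int k2"
      unfolding cell_center_def div1 using e2r meps[symmetric]
      by (simp add: right_diff_distrib[symmetric] algebra_simps)
  qed
qed

end

lemma mod_diff_cancel_int: "((a::int) - c) mod m = (b - c) mod m \<Longrightarrow> a mod m = b mod m"
  by (metis mod_diff_cong diff_add_cancel mod_add_cong)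

definition sig :: "nat \<Rightarrow> nat \<Rightarrow> nat \<Rightarrow> nat" where
  "sig m j i = nat ((int (i mod m) - int (j mod m)) mod int m) + m * nat ((int (i div m) - int (j div m)) mod int m)"

lemma sig_range: "m > 0 \<Longrightarrow> sig m j i < m^2"
proof -
  assume m: "m > 0"
  let ?r1 = "nat ((int (i mod m) - int (j mod m)) mod int m)"
  let ?r2 = "nat ((int (i div m) - int (j div m)) mod int m)"
  have "?r1 < m" "?r2 < m" using m by (simp_all add: nat_less_iff)
  then have "?r1 + m * ?r2 < m + m * ?r2" by simp
  also have "\<dots> = m * (?r2 + 1)" by simp
  also have "\<dots> \<le> m * m" using \<open>?r2 < m\<close> by (intro mult_le_mono2) simp
  finally show ?thesis by (simp add: sig_def power2_eq_square)
qed

lemma sig_inj: "m > 0 \<Longrightarrow> inj_on (sig m j) {..<m^2}"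
proof (rule inj_onI)
  fix i i' assume m: "m > 0" and i: "i \<in> {..<m^2}" and i': "i' \<in> {..<m^2}" and eq: "sig m j i = sig m j i'"
  let ?r1 = "\<lambda>i. (int (i mod m) - int (j mod m)) mod int m"
  let ?r2 = "\<lambda>i. (int (i div m) - int (j div m)) mod int m"
  have b: "nat (?r1 i) < m" "nat (?r1 i') < m" using m by (simp_all add: nat_less_iff)
  have "sig m j i mod m = nat (?r1 i)" "sig m j i' mod m = nat (?r1 i')"
    using b by (simp_all add: sig_def)
  then have "nat (?r1 i) = nat (?r1 i')" using eq by simp
  moreover have "0 \<le> ?r1 i" "0 \<le> ?r1 i'" using m by simp_all
  ultimately have "?r1 i = ?r1 i'" by (simp add: eq_nat_nat_iff)
  then have "int (i mod m) mod int m = int (i' mod m) mod int m" by (rule mod_diff_cancel_int)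
  then have im: "i mod m = i' mod m" using m by (simp add: zmod_int[symmetric])
  have "sig m j i div m = nat (?r2 i)" "sig m j i' div m = nat (?r2 i')"
    using b m by (simp_all add: sig_def)
  then have "nat (?r2 i) = nat (?r2 i')" using eq by simp
  moreover have "0 \<le> ?r2 i" "0 \<le> ?r2 i'" using m by simp_all
  ultimately have "?r2 i = ?r2 i'" by (simp add: eq_nat_nat_iff)
  then have "int (i div m) mod int m = int (i' div m) mod int m" by (rule mod_diff_cancel_int)
  moreover have "i div m < m" "i' div m < m" using i i' m
    by (simp_all add: less_mult_imp_div_less power2_eq_square)
  ultimately have id: "i div m = i' div m" by (simp add: zmod_int[symmetric])
  show "i = i'" using im id by (metis div_mult_mod_eq)
qed

lemma sig_bij: "m > 0 \<Longrightarrow> bij_betw (sig m j) {..<m^2} {..<m^2}"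
proof -
  assume m: "m > 0"
  have "sig m j ` {..<m^2} = {..<m^2}"
    using sig_inj[OF m] sig_range[OF m] by (intro endo_inj_surj) auto
  then show ?thesis using sig_inj[OF m] by (simp add: bij_betw_def)
qed

context lfun
begin

lemma col_sum:
  assumes meps: "real m * eps = 2 * Q" and m: "m > 0" and j: "j < m^2"
  shows "(\<Sum>i<m^2. l_eps l Q eps (cell_center eps m i) (cell_center eps m j))
       = (\<Sum>k<m^2. l_eps l Q eps (cell_center eps m k) (cell_center eps m 0))"
proof -
  have "(\<Sum>i<m^2. l_eps l Q eps (cell_center eps m i) (cell_center eps m j))
      = (\<Sum>i<m^2. l_eps l Q eps (cell_center eps m (sig m j i)) (cell_center eps m 0))"
    using lv_shift[OF meps m _ j] by (intro sum.cong) (auto simp: sig_def)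
  also have "\<dots> = (\<Sum>k<m^2. l_eps l Q eps (cell_center eps m k) (cell_center eps m 0))"
    by (rule sum.reindex_bij_betw[OF sig_bij[OF m]])
  finally show ?thesis .
qed

end

locale chain = lfun l Q eps for l Q eps +
  fixes m :: nat and lam C L N0 :: real
  assumes meps: "real m * eps = 2 * Q" and mpos: "m > 0"
    and Cp: "C > 0" and Lp: "L > 0" and lamp: "lam > 0" and N0p: "N0 > 0"
begin

definition "lv i j = l_eps l Q eps (cell_center eps m i) (cell_center eps m j)"
definition "Lz z i = (\<Sum>j<m^2. real (z ! j) * lv i j)"
definition "Phi z = (\<Sum>i<m^2. \<Sum>j<m^2. real (z ! i) * real (z ! j) * lv i j) / 2"
definition "Tz z = (\<Sum>i<m^2. real (z ! i))"
definition "dr z i = (if 0 < z ! i then death_rate l Q eps m C L N0 z i else 0)"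
definition "S0 = (\<Sum>k<m^2. lv k 0)"
definition "cc = C / (L * ln 2)"
definition "bb = lam * eps^2"

lemma lv_sym: "lv i j = lv j i" by (simp add: lv_def l_eps_sym)
lemma lv_diag: "lv i i = 1" by (simp add: lv_def l_eps_diag)
lemma lv_nonneg: "lv i j \<ge> 0" by (simp add: lv_def l_eps_nonneg)
lemma lv_col: "j < m^2 \<Longrightarrow> (\<Sum>i<m^2. lv i j) = S0"
  unfolding lv_def S0_def by (rule col_sum[OF meps mpos])

lemma S0_ge1: "S0 \<ge> 1"
proof -
  have "lv 0 0 \<le> S0" unfolding S0_def using mpos lv_nonneg
    by (intro member_le_sum) auto
  then show ?thesis by (simp add: lv_diag)
qed

lemma Phi_update:
  assumes "length z = m^2" "k < m^2"
  shows "Phi (z[k := v]) = Phi z + (real v - real (z ! k)) * Lz z k + (real v - real (z ! k))^2 / 2"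
proof -
  let ?d = "real v - real (z ! k)"
  have nth: "real (z[k := v] ! j) = real (z ! j) + (if j = k then ?d else 0)" if "j < m^2" for j
    using assms that by (auto simp: nth_list_update)
  have "(\<Sum>i<m^2. \<Sum>j<m^2. real (z[k := v] ! i) * real (z[k := v] ! j) * lv i j)
      = (\<Sum>i<m^2. \<Sum>j<m^2. (real (z ! i) + (if i = k then ?d else 0)) * (real (z ! j) + (if j = k then ?d else 0)) * lv i j)"
    using nth by (intro sum.cong) auto
  also have "\<dots> = (\<Sum>i<m^2. \<Sum>j<m^2. real (z ! i) * real (z ! j) * lv i j) + 2 * ?d * Lz z k + ?d^2"
    unfolding Lz_def by (rule quad_update[OF assms(2)]) (auto simp: lv_sym lv_diag)
  finally show ?thesis unfolding Phi_def by (simp add: field_simps)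
qed

lemma Lz_ge: "i < m^2 \<Longrightarrow> Lz z i \<ge> real (z ! i)"
proof -
  assume i: "i < m^2"
  have "real (z ! i) * lv i i \<le> Lz z i" unfolding Lz_def using i lv_nonneg
    by (intro member_le_sum) auto
  then show ?thesis by (simp add: lv_diag)
qed

lemma Lz_nonneg: "Lz z i \<ge> 0"
  unfolding Lz_def using lv_nonneg by (intro sum_nonneg) auto

lemma interf: "i < m^2 \<Longrightarrow> (\<Sum>j<m^2. (real (z ! j) - (if j = i then 1 else 0)) * lv i j) = Lz z i - 1"
  unfolding Lz_def by (simp add: left_diff_distrib sum_subtractf if_distrib[of "\<lambda>x. x * _"] lv_diag cong: if_cong)

lemma death_eq: "i < m^2 \<Longrightarrow> death_rate l Q eps m C L N0 z i = C / L * real (z ! i) * log 2 (1 + 1 / (N0 + (Lz z i - 1)))"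
  unfolding death_rate_def by (simp add: interf lv_def[symmetric])

end

lemma ln_lower: "(D::real) > 0 \<Longrightarrow> ln (1 + 1 / D) \<ge> 1 / (D + 1)"
proof -
  assume D: "D > 0"
  have "ln (D / (D + 1)) \<le> D / (D + 1) - 1" by (rule ln_le_minus_one) (use D in simp)
  also have "\<dots> = - (1 / (D + 1))" using D by (simp add: field_simps)
  finally have a: "ln (D / (D + 1)) \<le> - (1 / (D + 1))" .
  have "ln (D / (D + 1)) = - ln (1 + 1 / D)"
  proof -
    have "1 + 1 / D = (D + 1) / D" using D by (simp add: field_simps)
    then show ?thesis using D by (simp add: ln_div)
  qed
  then show ?thesis using a by simp
qed

lemma ratio_bound:
  fixes z Y N0 :: real
  assumes "1 \<le> z" "z \<le> Y" "N0 > 0"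
  shows "z * (Y - 1/2) / (N0 + Y) \<ge> z - (N0 + 1/2)"
proof -
  have pos: "N0 + Y > 0" using assms by simp
  have "(z - (N0 + 1/2)) * (N0 + Y) \<le> z * (Y - 1/2)"
  proof -
    have "(z - (N0 + 1/2)) * (N0 + Y) = z * (Y - 1/2) + z * (N0 + 1/2) - (N0 + 1/2) * (N0 + Y)"
      by (simp add: algebra_simps)
    moreover have "z * (N0 + 1/2) \<le> (N0 + Y) * (N0 + 1/2)"
      using assms by (intro mult_right_mono) auto
    ultimately show ?thesis by (simp add: algebra_simps)
  qed
  then show ?thesis using pos by (simp add: le_divide_eq)
qed

context chain
begin

lemma dr_props:
  assumes i: "i < m^2"
  shows "dr z i \<ge> 0" "0 < z ! i \<Longrightarrow> dr z i > 0" "dr z i \<le> cc * (1 + 1 / N0)"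
    "dr z i * (Lz z i - 1/2) \<ge> cc * real (z ! i) - cc * (N0 + 1/2)"
proof -
  have ccpos: "cc > 0" using Cp Lp by (simp add: cc_def)
  have main: "dr z i > 0 \<and> dr z i \<le> cc * (1 + 1 / N0) \<and> dr z i * (Lz z i - 1/2) \<ge> cc * real (z ! i) - cc * (N0 + 1/2)"
    if zi: "0 < z ! i"
  proof -
    define x where "x = real (z ! i)"
    define D where "D = N0 + (Lz z i - 1)"
    have x1: "x \<ge> 1" using zi by (simp add: x_def)
    have xL: "x \<le> Lz z i" using Lz_ge[OF i] by (simp add: x_def)
    have D: "D \<ge> N0 + x - 1" "D > 0" using xL x1 N0p by (auto simp: D_def)
    have dr: "dr z i = cc * x * ln (1 + 1 / D)"
      using zi death_eq[OF i, of z] by (simp add: dr_def x_def D_def log_def cc_def field_simps)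
    have lnpos: "ln (1 + 1 / D) > 0" by (rule ln_gt_zero) (use D in simp)
    have p1: "dr z i > 0" using dr lnpos ccpos x1 by simp
    have "ln (1 + 1 / D) \<le> 1 / D" using D by (intro ln_add_one_self_le_self) simp
    then have "cc * x * ln (1 + 1 / D) \<le> cc * x * (1 / D)" using ccpos x1 by (intro mult_left_mono) auto
    then have "dr z i \<le> cc * x * (1 / D)" using dr by simp
    also have "x * (1 / D) \<le> 1 + 1 / N0"
    proof -
      have "x \<le> (1 + 1 / N0) * D"
      proof -
        have "(1 + 1 / N0) * D \<ge> (1 + 1 / N0) * (N0 + x - 1)" using D N0p by (intro mult_left_mono) auto
        moreover have "(1 + 1 / N0) * (N0 + x - 1) = N0 + x + (x - 1) / N0" using N0p by (simp add: field_simps)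
        moreover have "(x - 1) / N0 \<ge> 0" using x1 N0p by simp
        ultimately show ?thesis using N0p by linarith
      qed
      then show ?thesis using D by (simp add: field_simps)
    qed
    then have "cc * (x * (1 / D)) \<le> cc * (1 + 1 / N0)" using ccpos by (intro mult_left_mono) auto
    then have "cc * x * (1 / D) \<le> cc * (1 + 1 / N0)" by (simp only: mult.assoc)
    finally have p2: "dr z i \<le> cc * (1 + 1 / N0)" .
    have "cc * x * (1 / (D + 1)) \<le> cc * x * ln (1 + 1 / D)" using ln_lower[OF D(2)] ccpos x1 by (intro mult_left_mono) auto
    then have "dr z i \<ge> cc * x * (1 / (D + 1))" using dr by simp
    then have "dr z i * (Lz z i - 1/2) \<ge> cc * x * (1 / (D + 1)) * (Lz z i - 1/2)"
      using xL x1 by (intro mult_right_mono) auto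
    moreover have "cc * x * (1 / (D + 1)) * (Lz z i - 1/2) = cc * (x * (Lz z i - 1/2) / (N0 + Lz z i))"
      by (simp add: D_def)
    moreover have "x * (Lz z i - 1/2) / (N0 + Lz z i) \<ge> x - (N0 + 1/2)"
      by (rule ratio_bound[OF x1 xL N0p])
    ultimately have "dr z i * (Lz z i - 1/2) \<ge> cc * (x - (N0 + 1/2))"
      using ccpos by (smt (verit) mult_left_mono)
    then show ?thesis using p1 p2 by (simp add: x_def right_diff_distrib)
  qed
  show "dr z i \<ge> 0" using main by (cases "0 < z ! i") (auto simp: dr_def)
  show "0 < z ! i \<Longrightarrow> dr z i > 0" using main by auto
  show "dr z i \<le> cc * (1 + 1 / N0)" using main ccpos N0p by (cases "0 < z ! i") (auto simp: dr_def)
  show "dr z i * (Lz z i - 1/2) \<ge> cc * real (z ! i) - cc * (N0 + 1/2)"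
    using main ccpos N0p by (cases "0 < z ! i") (auto simp: dr_def)
qed

end

lemma int_point:
  "(\<integral>\<^sup>+ y. ennreal (if y = w then c else 0) * g y \<partial>count_space A) = (if w \<in> A then ennreal c * g w else 0)"
proof (cases "w \<in> A")
  case True
  have "(\<integral>\<^sup>+ y. ennreal (if y = w then c else 0) * g y \<partial>count_space A) = (\<Sum>y\<in>{w}. ennreal (if y = w then c else 0) * g y)"
    using True by (intro nn_integral_count_space') auto
  then show ?thesis using True by simp
next
  case False
  have "(\<integral>\<^sup>+ y. ennreal (if y = w then c else 0) * g y \<partial>count_space A) = (\<Sum>y\<in>{}. ennreal (if y = w then c else 0) * g y)"
    using False by (intro nn_integral_count_space') auto
  then show ?thesis using False by simp
qed

context chain
begin

lemma dr_alt: "(if 0 < z ! i \<and> y = w then death_rate l Q eps m C L N0 z i else 0) = (if y = w then dr z i else 0)"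
  by (auto simp: dr_def)

lemma q_expand:
  "disc_rate l Q eps m lam C L N0 z y =
    (\<Sum>i<m^2. (if y = z[i := z ! i + 1] then bb else 0)) + (\<Sum>i<m^2. (if y = z[i := z ! i - 1] then dr z i else 0))"
  unfolding disc_rate_def bb_def dr_alt by simp

lemma q_nonneg: "disc_rate l Q eps m lam C L N0 z y \<ge> 0"
  unfolding q_expand using dr_props(1) lamp
  by (intro add_nonneg_nonneg sum_nonneg) (auto simp: bb_def)

lemma rate_int:
  assumes z: "z \<in> disc_states m"
  shows "(\<integral>\<^sup>+ y. ennreal (disc_rate l Q eps m lam C L N0 z y) * g y \<partial>count_space (disc_states m - {z}))
    = (\<Sum>i<m^2. ennreal bb * g (z[i := z ! i + 1])) + (\<Sum>i<m^2. ennreal (dr z i) * g (z[i := z ! i - 1]))"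
proof -
  let ?A = "disc_states m - {z}"
  have bbn: "bb \<ge> 0" using lamp by (simp add: bb_def)
  have e: "ennreal (disc_rate l Q eps m lam C L N0 z y) =
      (\<Sum>i<m^2. ennreal (if y = z[i := z ! i + 1] then bb else 0)) + (\<Sum>i<m^2. ennreal (if y = z[i := z ! i - 1] then dr z i else 0))" for y
  proof -
    have n1: "(\<Sum>i<m^2. ennreal (if y = z[i := z ! i + 1] then bb else 0)) = ennreal (\<Sum>i<m^2. (if y = z[i := z ! i + 1] then bb else 0))"
      using bbn by (intro sum_ennreal) auto
    have n2: "(\<Sum>i<m^2. ennreal (if y = z[i := z ! i - 1] then dr z i else 0)) = ennreal (\<Sum>i<m^2. (if y = z[i := z ! i - 1] then dr z i else 0))"
      using dr_props(1) by (intro sum_ennreal) auto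
    show ?thesis unfolding q_expand n1 n2 using bbn dr_props(1)
      by (intro ennreal_plus sum_nonneg) auto
  qed
  have "(\<integral>\<^sup>+ y. ennreal (disc_rate l Q eps m lam C L N0 z y) * g y \<partial>count_space ?A)
     = (\<Sum>i<m^2. \<integral>\<^sup>+ y. ennreal (if y = z[i := z ! i + 1] then bb else 0) * g y \<partial>count_space ?A)
     + (\<Sum>i<m^2. \<integral>\<^sup>+ y. ennreal (if y = z[i := z ! i - 1] then dr z i else 0) * g y \<partial>count_space ?A)"
    unfolding e by (simp add: distrib_right sum_distrib_right nn_integral_add nn_integral_sum)
  also have "\<dots> = (\<Sum>i<m^2. ennreal bb * g (z[i := z ! i + 1])) + (\<Sum>i<m^2. ennreal (dr z i) * g (z[i := z ! i - 1]))"
  proof (intro arg_cong2[where f="(+)"] sum.cong refl)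
    fix i assume "i \<in> {..<m^2}"
    then have i: "i < length z" using z by (simp add: disc_states_def)
    have "z[i := z ! i + 1] \<in> ?A" using i z
      by (auto simp: disc_states_def list_eq_iff_nth_eq nth_list_update)
    then show "(\<integral>\<^sup>+ y. ennreal (if y = z[i := z ! i + 1] then bb else 0) * g y \<partial>count_space ?A) = ennreal bb * g (z[i := z ! i + 1])"
      by (simp add: int_point)
    show "(\<integral>\<^sup>+ y. ennreal (if y = z[i := z ! i - 1] then dr z i else 0) * g y \<partial>count_space ?A) = ennreal (dr z i) * g (z[i := z ! i - 1])"
    proof (cases "0 < z ! i")
      case True
      have "z[i := z ! i - 1] \<in> ?A" using i z True
        by (auto simp: disc_states_def list_eq_iff_nth_eq nth_list_update)
      then show ?thesis by (simp add: int_point)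
    next
      case False
      then show ?thesis by (simp add: int_point dr_def)
    qed
  qed
  finally show ?thesis .
qed

end

context chain
begin

definition "Qz z = real (m^2) * bb + (\<Sum>i<m^2. dr z i)"
definition "Xz z = (\<Sum>i<m^2. bb * Phi (z[i := z ! i + 1])) + (\<Sum>i<m^2. dr z i * Phi (z[i := z ! i - 1]))"
definition "K0 = real (m^2) * bb / 2 + real (m^2) * cc * (N0 + 1/2)"
definition "Qmax = real (m^2) * bb + real (m^2) * (cc * (1 + 1 / N0))"

lemma bb_pos: "bb > 0" using lamp eps by (simp add: bb_def)
lemma cc_pos: "cc > 0" using Cp Lp by (simp add: cc_def)
lemma n_pos: "real (m^2) \<ge> 1" using mpos by (simp add: Suc_le_eq)

lemma Phi_nonneg: "Phi z \<ge> 0"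
  unfolding Phi_def using lv_nonneg by (auto intro!: sum_nonneg divide_nonneg_nonneg)

lemma Tz_nonneg: "Tz z \<ge> 0" unfolding Tz_def by (auto intro!: sum_nonneg)

lemma Qz_bounds: "bb \<le> Qz z" "Qz z \<le> Qmax"
proof -
  have "bb \<le> real (m^2) * bb" using n_pos bb_pos by simp
  also have "\<dots> \<le> Qz z" unfolding Qz_def using mpos by (auto intro!: sum_nonneg dr_props(1))
  finally show "bb \<le> Qz z" .
  have "(\<Sum>i<m^2. dr z i) \<le> (\<Sum>i<m^2. cc * (1 + 1 / N0))" by (intro sum_mono dr_props(3)) auto
  then show "Qz z \<le> Qmax" unfolding Qz_def Qmax_def by simp
qed

lemma sum_Lz: "(\<Sum>i<m^2. Lz z i) = S0 * Tz z"
proof -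
  have "(\<Sum>i<m^2. Lz z i) = (\<Sum>j<m^2. \<Sum>i<m^2. real (z ! j) * lv i j)"
    unfolding Lz_def by (rule sum.swap)
  also have "\<dots> = (\<Sum>j<m^2. real (z ! j) * S0)"
    by (intro sum.cong refl) (simp add: sum_distrib_left[symmetric] lv_col)
  finally show ?thesis by (simp add: Tz_def sum_distrib_left mult.commute)
qed

lemma Xz_eq:
  assumes z: "z \<in> disc_states m"
  shows "Xz z = Qz z * Phi z + ((\<Sum>i<m^2. bb * (Lz z i + 1/2)) + (\<Sum>i<m^2. dr z i * (1/2 - Lz z i)))"
proof -
  have len: "length z = m^2" using z by (simp add: disc_states_def)
  have b: "bb * Phi (z[i := z ! i + 1]) = bb * Phi z + bb * (Lz z i + 1/2)" if "i < m^2" for i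
    using Phi_update[OF len that, of "z ! i + 1"] by (simp add: algebra_simps)
  have d: "dr z i * Phi (z[i := z ! i - 1]) = dr z i * Phi z + dr z i * (1/2 - Lz z i)" if "i < m^2" for i
  proof (cases "0 < z ! i")
    case True
    then have dm: "real (z ! i - 1) - real (z ! i) = -1" by (simp add: of_nat_diff)
    have "Phi (z[i := z ! i - 1]) = Phi z + (real (z ! i - 1) - real (z ! i)) * Lz z i + (real (z ! i - 1) - real (z ! i))^2 / 2"
      by (rule Phi_update[OF len that])
    then have "Phi (z[i := z ! i - 1]) = Phi z - Lz z i + 1/2" unfolding dm by simp
    then show ?thesis by (simp only: ring_distribs)
  next
    case False then show ?thesis by (simp add: dr_def)
  qed
  have s1: "(\<Sum>i<m^2. bb * Phi (z[i := z ! i + 1])) = (\<Sum>i<m^2. bb * Phi z + bb * (Lz z i + 1/2))"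
    by (intro sum.cong refl) (rule b, simp)
  have s2: "(\<Sum>i<m^2. dr z i * Phi (z[i := z ! i - 1])) = (\<Sum>i<m^2. dr z i * Phi z + dr z i * (1/2 - Lz z i))"
    by (intro sum.cong refl) (rule d, simp)
  show ?thesis unfolding Xz_def Qz_def s1 s2 sum.distrib
    by (simp add: sum_distrib_right[symmetric] sum_distrib_left[symmetric] algebra_simps)
qed

lemma G_bound:
  assumes z: "z \<in> disc_states m"
  shows "Xz z - Qz z * Phi z \<le> K0 - (cc - bb * S0) * Tz z"
proof -
  have "(\<Sum>i<m^2. bb * (Lz z i + 1/2)) = bb * S0 * Tz z + real (m^2) * bb / 2"
    by (simp add: sum.distrib sum_distrib_left[symmetric] sum_Lz algebra_simps)
  moreover have "(\<Sum>i<m^2. dr z i * (1/2 - Lz z i)) \<le> (\<Sum>i<m^2. cc * (N0 + 1/2) - cc * real (z ! i))"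
  proof (intro sum_mono)
    fix i assume "i \<in> {..<m^2}"
    then show "dr z i * (1/2 - Lz z i) \<le> cc * (N0 + 1/2) - cc * real (z ! i)"
      using dr_props(4)[of i z] by (simp add: algebra_simps)
  qed
  moreover have "(\<Sum>i<m^2. cc * (N0 + 1/2) - cc * real (z ! i)) = real (m^2) * cc * (N0 + 1/2) - cc * Tz z"
    by (simp add: sum_subtractf Tz_def sum_distrib_left)
  ultimately show ?thesis using Xz_eq[OF z] unfolding K0_def by (simp add: algebra_simps)
qed

lemma drift_real:
  assumes z: "z \<in> disc_states m" and stab: "bb * S0 < cc"
    and T: "Tz z \<ge> (K0 + Qmax) / (cc - bb * S0)"
  shows "Xz z / Qz z + 1 \<le> Phi z"
proof -
  have pos: "cc - bb * S0 > 0" using stab by simp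
  have "(cc - bb * S0) * Tz z \<ge> K0 + Qmax" using T pos by (simp add: divide_le_eq mult.commute)
  then have "Xz z - Qz z * Phi z \<le> - Qmax" using G_bound[OF z] by simp
  then have "Xz z - Qz z * Phi z \<le> - Qz z" using Qz_bounds(2)[of z] by simp
  then have "Xz z \<le> Qz z * (Phi z - 1)" by (simp add: algebra_simps)
  then have "Xz z / Qz z \<le> Phi z - 1" using Qz_bounds(1)[of z] bb_pos by (simp add: divide_le_eq mult.commute)
  then show ?thesis by simp
qed

lemma bnd_real:
  assumes z: "z \<in> disc_states m" and stab: "bb * S0 < cc"
  shows "Xz z / Qz z \<le> Phi z + K0 / bb"
proof -
  have pos: "cc - bb * S0 > 0" using stab by simp
  have K0n: "K0 \<ge> 0" unfolding K0_def using bb_pos cc_pos N0p by simp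
  have "Xz z - Qz z * Phi z \<le> K0" using G_bound[OF z] pos Tz_nonneg[of z]
    by (smt (verit) mult_nonneg_nonneg)
  also have "K0 \<le> K0 / bb * Qz z"
  proof -
    have "K0 / bb * bb \<le> K0 / bb * Qz z" using Qz_bounds(1)[of z] K0n bb_pos by (intro mult_left_mono) auto
    then show ?thesis using bb_pos by simp
  qed
  finally have "Xz z \<le> Qz z * (Phi z + K0 / bb)" by (simp add: algebra_simps)
  then show ?thesis using Qz_bounds(1)[of z] bb_pos by (simp add: divide_le_eq mult.commute)
qed

end

lemma Kop_jump_eq:
  assumes "z \<in> S"
  shows "Kop (jump_prob q S) S V z = (\<integral>\<^sup>+ y. ennreal (q z y) * V y \<partial>count_space (S - {z})) / out_rate q S z"
proof -
  have "Kop (jump_prob q S) S V z = (\<integral>\<^sup>+ y. ennreal (q z y) * V y * indicator (S - {z}) y / out_rate q S z \<partial>count_space UNIV)"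
    unfolding Kop_def using assms
    by (subst nn_integral_count_space_indicator)
       (auto intro!: nn_integral_cong simp: jump_prob_def indicator_def ennreal_divide_times ennreal_times_divide mult.commute)
  also have "\<dots> = (\<integral>\<^sup>+ y. ennreal (q z y) * V y \<partial>count_space (S - {z})) / out_rate q S z"
    by (subst nn_integral_divide) (auto simp: nn_integral_count_space_indicator)
  finally show ?thesis .
qed

context chain
begin

abbreviation "qq \<equiv> disc_rate l Q eps m lam C L N0"
abbreviation "SS \<equiv> disc_states m"

lemma out_eq: "z \<in> SS \<Longrightarrow> out_rate qq SS z = ennreal (Qz z)"
proof -
  assume z: "z \<in> SS"
  have "out_rate qq SS z = (\<Sum>i<m^2. ennreal bb * 1) + (\<Sum>i<m^2. ennreal (dr z i) * 1)"
    using rate_int[OF z, of "\<lambda>_. 1"] by (simp add: out_rate_def)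
  also have "\<dots> = ennreal (real (m^2) * bb) + ennreal (\<Sum>i<m^2. dr z i)"
  proof -
    have "(\<Sum>i<m^2. ennreal bb * 1) = ennreal (real (m^2) * bb)"
      using bb_pos by (simp add: ennreal_mult'' ennreal_of_nat_eq_real_of_nat)
    moreover have "(\<Sum>i<m^2. ennreal (dr z i) * 1) = ennreal (\<Sum>i<m^2. dr z i)"
      by (simp, intro sum_ennreal) (use dr_props(1) in auto)
    ultimately show ?thesis by simp
  qed
  also have "\<dots> = ennreal (Qz z)" unfolding Qz_def using bb_pos dr_props(1)
    by (intro ennreal_plus[symmetric] sum_nonneg) auto
  finally show ?thesis .
qed

lemma Xz_nonneg: "Xz z \<ge> 0"
  unfolding Xz_def using bb_pos dr_props(1) Phi_nonneg
  by (intro add_nonneg_nonneg sum_nonneg mult_nonneg_nonneg) auto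

lemma PV_eq: "z \<in> SS \<Longrightarrow> Kop (jump_prob qq SS) SS (\<lambda>y. ennreal (Phi y)) z = ennreal (Xz z / Qz z)"
proof -
  assume z: "z \<in> SS"
  have "(\<integral>\<^sup>+ y. ennreal (qq z y) * ennreal (Phi y) \<partial>count_space (SS - {z}))
     = (\<Sum>i<m^2. ennreal bb * ennreal (Phi (z[i := z ! i + 1]))) + (\<Sum>i<m^2. ennreal (dr z i) * ennreal (Phi (z[i := z ! i - 1])))"
    by (rule rate_int[OF z])
  also have "\<dots> = ennreal (Xz z)"
  proof -
    have "(\<Sum>i<m^2. ennreal bb * ennreal (Phi (z[i := z ! i + 1]))) = ennreal (\<Sum>i<m^2. bb * Phi (z[i := z ! i + 1]))"
      using bb_pos Phi_nonneg by (simp add: ennreal_mult'[symmetric])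
    moreover have "(\<Sum>i<m^2. ennreal (dr z i) * ennreal (Phi (z[i := z ! i - 1]))) = ennreal (\<Sum>i<m^2. dr z i * Phi (z[i := z ! i - 1]))"
    proof -
      have "(\<Sum>i<m^2. ennreal (dr z i) * ennreal (Phi (z[i := z ! i - 1]))) = (\<Sum>i<m^2. ennreal (dr z i * Phi (z[i := z ! i - 1])))"
        using dr_props(1) Phi_nonneg by (intro sum.cong refl) (simp add: ennreal_mult)
      also have "\<dots> = ennreal (\<Sum>i<m^2. dr z i * Phi (z[i := z ! i - 1]))"
        by (intro sum_ennreal) (use dr_props(1) Phi_nonneg in auto)
      finally show ?thesis .
    qed
    moreover have "ennreal (\<Sum>i<m^2. bb * Phi (z[i := z ! i + 1])) + ennreal (\<Sum>i<m^2. dr z i * Phi (z[i := z ! i - 1]))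
        = ennreal (Xz z)"
      unfolding Xz_def using bb_pos dr_props(1) Phi_nonneg
      by (intro ennreal_plus[symmetric] sum_nonneg mult_nonneg_nonneg) auto
    ultimately show ?thesis by simp
  qed
  finally show ?thesis using Kop_jump_eq[OF z] out_eq[OF z] Qz_bounds(1)[of z] bb_pos Xz_nonneg
    by (simp add: divide_ennreal)
qed

lemma q_birth: "z \<in> SS \<Longrightarrow> i < m^2 \<Longrightarrow> qq z (z[i := z ! i + 1]) \<ge> bb"
proof -
  assume "z \<in> SS" "i < m^2"
  have "(\<lambda>k. if z[i := z ! i + 1] = z[k := z ! k + 1] then bb else 0) i \<le> (\<Sum>k<m^2. (if z[i := z ! i + 1] = z[k := z ! k + 1] then bb else 0))"
    by (rule member_le_sum) (use \<open>i < m^2\<close> bb_pos in auto)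
  then have "bb \<le> (\<Sum>k<m^2. (if z[i := z ! i + 1] = z[k := z ! k + 1] then bb else 0))" by simp
  also have "\<dots> \<le> qq z (z[i := z ! i + 1])"
    unfolding q_expand using dr_props(1) by (intro le_add_same_cancel1[THEN iffD2] sum_nonneg) auto
  finally show ?thesis .
qed

end

context chain
begin

lemma q_death: "z \<in> SS \<Longrightarrow> i < m^2 \<Longrightarrow> 0 < z ! i \<Longrightarrow> qq z (z[i := z ! i - 1]) > 0"
proof -
  assume z: "z \<in> SS" and i: "i < m^2" and zi: "0 < z ! i"
  have "(\<lambda>k. if z[i := z ! i - 1] = z[k := z ! k - 1] then dr z k else 0) i \<le> (\<Sum>k<m^2. (if z[i := z ! i - 1] = z[k := z ! k - 1] then dr z k else 0))"
    by (rule member_le_sum) (use i dr_props(1) in auto)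
  then have "dr z i \<le> (\<Sum>k<m^2. (if z[i := z ! i - 1] = z[k := z ! k - 1] then dr z k else 0))" by simp
  also have "\<dots> \<le> qq z (z[i := z ! i - 1])"
    unfolding q_expand using bb_pos by (intro le_add_same_cancel2[THEN iffD2] sum_nonneg) auto
  finally show ?thesis using dr_props(2)[OF i zi] by simp
qed

abbreviation "RR \<equiv> {(a, b). a \<in> SS \<and> b \<in> SS \<and> a \<noteq> b \<and> qq a b > 0}"

lemma down: "z \<in> SS \<Longrightarrow> (z, replicate (m^2) 0) \<in> RR\<^sup>*"
proof (induction "sum_list z" arbitrary: z rule: less_induct)
  case less
  have len: "length z = m^2" using less.prems by (simp add: disc_states_def)
  show ?case
  proof (cases "\<exists>i<m^2. 0 < z ! i")
    case False
    then have "z = replicate (m^2) 0" using len by (auto simp: list_eq_iff_nth_eq)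
    then show ?thesis by simp
  next
    case True
    then obtain i where i: "i < m^2" "0 < z ! i" by blast
    let ?z' = "z[i := z ! i - 1]"
    have z'S: "?z' \<in> SS" using less.prems by (simp add: disc_states_def)
    have neq: "?z' \<noteq> z" using i len by (metis diff_less less_one nat_neq_iff nth_list_update_eq)
    have "(z, ?z') \<in> RR" using less.prems z'S neq q_death[OF less.prems i] by auto
    moreover have "sum_list ?z' < sum_list z"
    proof -
      have "z ! i \<le> sum_list z" using elem_le_sum_list[of i z] len i by simp
      then show ?thesis using i len by (simp add: sum_list_update)
    qed
    then have "(?z', replicate (m^2) 0) \<in> RR\<^sup>*" using less.hyps z'S by blast
    ultimately show ?thesis by (rule converse_rtrancl_into_rtrancl)
  qed
qed

lemma up: "w \<in> SS \<Longrightarrow> (replicate (m^2) 0, w) \<in> RR\<^sup>*"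
proof (induction "sum_list w" arbitrary: w rule: less_induct)
  case less
  have len: "length w = m^2" using less.prems by (simp add: disc_states_def)
  show ?case
  proof (cases "\<exists>i<m^2. 0 < w ! i")
    case False
    then have "w = replicate (m^2) 0" using len by (auto simp: list_eq_iff_nth_eq)
    then show ?thesis by simp
  next
    case True
    then obtain i where i: "i < m^2" "0 < w ! i" by blast
    define w' where "w' = w[i := w ! i - 1]"
    have w'S: "w' \<in> SS" using less.prems by (simp add: disc_states_def w'_def)
    have wback: "w'[i := w' ! i + 1] = w" using i len by (simp add: list_update_overwrite w'_def)
    have neq: "w' \<noteq> w" using i len unfolding w'_def by (metis diff_less less_one nat_neq_iff nth_list_update_eq)
    have "qq w' w \<ge> bb" using q_birth[OF w'S i(1)] wback by simp
    then have "(w', w) \<in> RR" using less.prems w'S neq bb_pos by auto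
    moreover have "sum_list w' < sum_list w"
    proof -
      have "w ! i \<le> sum_list w" using elem_le_sum_list[of i w] len i by simp
      then show ?thesis using i len by (simp add: sum_list_update w'_def)
    qed
    then have "(replicate (m^2) 0, w') \<in> RR\<^sup>*" using less.hyps w'S by blast
    ultimately show ?thesis by (rule rtrancl_into_rtrancl[rotated])
  qed
qed

lemma irreducible: "ctmc_irreducible qq SS"
  unfolding ctmc_irreducible_def using down up by (blast intro: rtrancl_trans)

lemma succ: "z \<in> SS \<Longrightarrow> \<exists>y\<in>SS. y \<noteq> z \<and> qq z y > 0"
proof -
  assume z: "z \<in> SS"
  have len: "length z = m^2" using z by (simp add: disc_states_def)
  have m2: "0 < m^2" using mpos by simp
  let ?y = "z[0 := z ! 0 + 1]"
  have "?y \<in> SS" using z by (simp add: disc_states_def)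
  moreover have "?y \<noteq> z" using len m2 by (metis n_not_Suc_n nth_list_update_eq Suc_eq_plus1)
  moreover have "qq z ?y > 0" using q_birth[OF z m2] bb_pos by simp
  ultimately show ?thesis by blast
qed

lemma finite_F: "finite {z \<in> SS. Tz z < T0}"
proof (rule finite_subset)
  show "finite {xs. set xs \<subseteq> {..nat \<lceil>T0\<rceil>} \<and> length xs = m^2}"
    by (rule finite_lists_length_eq) simp
  show "{z \<in> SS. Tz z < T0} \<subseteq> {xs. set xs \<subseteq> {..nat \<lceil>T0\<rceil>} \<and> length xs = m^2}"
  proof
    fix z assume "z \<in> {z \<in> SS. Tz z < T0}"
    then have z: "length z = m^2" "Tz z < T0" by (auto simp: disc_states_def)
    have "set z \<subseteq> {..nat \<lceil>T0\<rceil>}"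
    proof
      fix v assume "v \<in> set z"
      then obtain i where i: "i < m^2" "z ! i = v" using z by (auto simp: in_set_conv_nth)
      have "real (z ! i) \<le> Tz z" unfolding Tz_def using i by (intro member_le_sum) auto
      then have "real v < T0" using z i by simp
      then have "\<lceil>real v\<rceil> \<le> \<lceil>T0\<rceil>" by (intro ceiling_mono) simp
      then show "v \<in> {..nat \<lceil>T0\<rceil>}" by simp
    qed
    then show "z \<in> {xs. set xs \<subseteq> {..nat \<lceil>T0\<rceil>} \<and> length xs = m^2}" using z by simp
  qed
qed

theorem ergodic:
  assumes stab: "bb * S0 < cc"
  shows "ctmc_ergodic qq SS"
  unfolding ctmc_ergodic_def
proof (intro conjI ballI irreducible)
  fix x assume x: "x \<in> SS"
  define T0 where "T0 = (K0 + Qmax) / (cc - bb * S0)"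
  show "ctmc_positive_recurrent qq SS x"
  proof (rule pos_rec_foster[OF x bb_pos _ irreducible succ finite_F[of T0], where V="\<lambda>y. ennreal (Phi y)" and D="K0 / bb"])
    fix z assume z: "z \<in> SS"
    show "ennreal bb \<le> out_rate qq SS z \<and> out_rate qq SS z < \<infinity>"
      using out_eq[OF z] Qz_bounds(1)[of z] by (simp add: ennreal_leI)
    show "Kop (jump_prob qq SS) SS (\<lambda>y. ennreal (Phi y)) z \<le> ennreal (Phi z) + ennreal (K0 / bb)"
    proof -
      have K0n: "K0 \<ge> 0" unfolding K0_def using bb_pos cc_pos N0p by simp
      have "ennreal (Xz z / Qz z) \<le> ennreal (Phi z + K0 / bb)" by (intro ennreal_leI bnd_real[OF z stab])
      then show ?thesis using PV_eq[OF z] Phi_nonneg K0n bb_pos by (simp add: ennreal_plus)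
    qed
  next
    fix z assume z: "z \<in> SS - {z \<in> SS. Tz z < T0}"
    then have zS: "z \<in> SS" and T: "Tz z \<ge> T0" by auto
    have "Xz z / Qz z + 1 \<le> Phi z" using drift_real[OF zS stab] T by (simp add: T0_def)
    moreover have "Xz z / Qz z \<ge> 0" using Xz_nonneg Qz_bounds(1)[of z] bb_pos by simp
    ultimately show "Kop (jump_prob qq SS) SS (\<lambda>y. ennreal (Phi y)) z + 1 \<le> ennreal (Phi z)"
    proof -
      have "ennreal (Xz z / Qz z + 1) = ennreal (Xz z / Qz z) + ennreal 1"
        by (rule ennreal_plus) (use \<open>Xz z / Qz z \<ge> 0\<close> in auto)
      then have "Kop (jump_prob qq SS) SS (\<lambda>y. ennreal (Phi y)) z + 1 = ennreal (Xz z / Qz z + 1)"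
        using PV_eq[OF zS] by simp
      also have "\<dots> \<le> ennreal (Phi z)" by (rule ennreal_leI) fact
      finally show ?thesis .
    qed
  next
    show "K0 / bb \<ge> 0" unfolding K0_def using bb_pos cc_pos N0p by simp
    show "ennreal (Phi x) < \<infinity>" by simp
  qed
qed

end

theorem mainTheorem9:
  fixes Q eps lam C L N0 :: real and l :: "real \<Rightarrow> real" and m :: nat
  assumes "Q > 0" and "eps > 0" and "real m = 2 * Q / eps"
    and "C > 0" and "L > 0" and "lam > 0" and "N0 > 0"
    and "\<forall>r\<ge>0. l r \<ge> 0" and "l 0 = 1"
    and "\<forall>r s. 0 \<le> r \<longrightarrow> r \<le> s \<longrightarrow> l s \<le> l r"
    and "bounded (l ` {0..})"
    and "lam < C / (L * ln 2 * eps\<^sup>2 *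
            (\<Sum>k<m\<^sup>2. l_eps l Q eps (cell_center eps m k) (cell_center eps m 0)))"
  shows "ctmc_ergodic (disc_rate l Q eps m lam C L N0) (disc_states m)"
proof -
  have mr: "real m > 0" using assms(1,2,3) by simp
  then have mpos: "m > 0" by simp
  have meps: "real m * eps = 2 * Q" using assms(2,3) by (simp add: field_simps)
  interpret chain l Q eps m lam C L N0
    by unfold_locales (use assms meps mpos in auto)
  have S0eq: "(\<Sum>k<m\<^sup>2. l_eps l Q eps (cell_center eps m k) (cell_center eps m 0)) = S0"
    by (simp add: S0_def lv_def)
  have dpos: "L * ln 2 * eps\<^sup>2 * S0 > 0" using assms(2,5) S0_ge1 by simp
  have "lam * (L * ln 2 * eps\<^sup>2 * S0) < C" using assms(12) dpos unfolding S0eq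
    by (simp add: less_divide_eq)
  then have "lam * eps\<^sup>2 * S0 * (L * ln 2) < C" by (simp add: algebra_simps)
  then have stab: "bb * S0 < cc" unfolding bb_def cc_def using assms(5)
    by (simp add: less_divide_eq algebra_simps)
  show ?thesis by (rule ergodic[OF stab])
qed

end
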